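(* Let $q\ge7$ be a prime power and $p$ an odd prime, let $E/\mathbb{F}_q$ be an elliptic curve with $E(\mathbb{F}_q)\cong\mathbb{Z}_p\oplus\mathbb{Z}_p$, $\mathcal{P}=E(\mathbb{F}_q)$, let $Q\in E(\mathbb{F}_{q^2})\setminus E(\mathbb{F}_q)$ satisfy $Q\oplus\phi(Q)=\infty$, let $k$ be an integer with $p\mid k$ and $0<k<p^2/2$, and let $D=k(Q+\phi(Q))$. Then the NMDS code $\mathcal{C}(E,\mathcal{P},D)$, with parameters $[p^2,2k,p^2-2k]$, satisfies $A_w>0$ for every $w$ with $p^2-2k\le w\le p^2$.
   Context: $A_w$ is the number of codewords of Hamming weight $w$. Elliptic curve $E/\mathbb{F}_q$: nonsingular Weierstrass curve with point at infinity $\infty$ as identity of the group law $\oplus$; $\phi$ is the $q$-Frobenius $(x,y)\mapsto(x^q,y^q)$. For $\mathcal{P}=\{P_1,\dots,P_n\}\subseteq E(\mathbb{F}_q)$ and a Galois-invariant divisor $D$ with support disjoint from $\mathcal{P}$ and $0<\deg D<n$, $\mathcal{C}(E,\mathcal{P},D)=\{(f(P_1),\dots,f(P_n)):f\in\mathscr{L}(D)\}$ where $\mathscr{L}(D)=\{f\in\mathbb{F}_q(E)^\times:\operatorname{div}(f)\ge-D\}\cup\{0\}$. *)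

theory Defs
  imports "HOL-Algebra.Elementary_Groups" "HOL-Computational_Algebra.Polynomial"
    "HOL-Library.Extended_Nat"
begin

text \<open>A bivariate polynomial g(x,y) is represented as a polynomial in y whose
coefficients are polynomials in x.\<close>

type_synonym 'k bipoly = "'k poly poly"

definition eval2 :: "'k::comm_ring_1 bipoly \<Rightarrow> 'k \<Rightarrow> 'k \<Rightarrow> 'k" where
  "eval2 g a b = poly (map_poly (\<lambda>c. poly c a) g) b"

definition varX :: "'k::comm_ring_1 bipoly" where "varX = [:[:0, 1:]:]"
definition varY :: "'k::comm_ring_1 bipoly" where "varY = [:0, 1:]"
definition cst :: "'k::comm_ring_1 \<Rightarrow> 'k bipoly" where "cst c = [:[:c:]:]"

definition coeffs_in :: "'k::comm_ring_1 set \<Rightarrow> 'k bipoly \<Rightarrow> bool" where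
  "coeffs_in F g \<longleftrightarrow> (\<forall>i j. coeff (coeff g j) i \<in> F)"

text \<open>g lies in m_P^n O_P, where O_P is the local ring of the curve F = 0 at
P = (a,b): there is h with h(P) \<noteq> 0 such that h*g \<in> (x-a, y-b)^n + (F).\<close>

definition in_mpow :: "'k::field bipoly \<Rightarrow> 'k \<Rightarrow> 'k \<Rightarrow> nat \<Rightarrow> 'k bipoly \<Rightarrow> bool" where
  "in_mpow F a b n g \<longleftrightarrow>
     (\<exists>h v u. eval2 h a b \<noteq> 0 \<and>
        h * g = v * F + (\<Sum>i\<le>n. u i * (varX - cst a) ^ i * (varY - cst b) ^ (n - i)))"

definition ordp :: "'k::field bipoly \<Rightarrow> 'k \<Rightarrow> 'k \<Rightarrow> 'k bipoly \<Rightarrow> enat" where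
  "ordp F a b g = Sup {enat n | n. in_mpow F a b n g}"

record 'k weier =
  wa1 :: 'k  wa2 :: 'k  wa3 :: 'k  wa4 :: 'k  wa6 :: 'k

datatype 'k ecpt = Inf | Pt 'k 'k

definition on_curve :: "'k::field weier \<Rightarrow> 'k \<Rightarrow> 'k \<Rightarrow> bool" where
  "on_curve E x y \<longleftrightarrow>
     y^2 + wa1 E * x * y + wa3 E * y = x^3 + wa2 E * x^2 + wa4 E * x + wa6 E"

text \<open>Nonsingularity (the point at infinity of a Weierstrass curve is always smooth):
no affine point of the curve where both partial derivatives vanish.\<close>
definition nonsingular :: "'k::field weier \<Rightarrow> bool" where
  "nonsingular E \<longleftrightarrow> (\<forall>x y. on_curve E x y \<longrightarrow>
     \<not> (wa1 E * y - 3 * x^2 - 2 * wa2 E * x - wa4 E = 0 \<and> 2 * y + wa1 E * x + wa3 E = 0))"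

definition points :: "'k::field weier \<Rightarrow> 'k set \<Rightarrow> 'k ecpt set" where
  "points E K = insert Inf {Pt x y | x y. x \<in> K \<and> y \<in> K \<and> on_curve E x y}"

definition eneg :: "'k::field weier \<Rightarrow> 'k ecpt \<Rightarrow> 'k ecpt" where
  "eneg E P = (case P of Inf \<Rightarrow> Inf | Pt x y \<Rightarrow> Pt x (- y - wa1 E * x - wa3 E))"

definition eadd :: "'k::field weier \<Rightarrow> 'k ecpt \<Rightarrow> 'k ecpt \<Rightarrow> 'k ecpt" where
  "eadd E P1 P2 = (case P1 of Inf \<Rightarrow> P2 | Pt x1 y1 \<Rightarrow> (case P2 of Inf \<Rightarrow> P1 | Pt x2 y2 \<Rightarrow>
     (if x1 = x2 \<and> y1 + y2 + wa1 E * x2 + wa3 E = 0 then Inf else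
      let (l, nu) =
        (if x1 = x2 then
           ((3 * x1^2 + 2 * wa2 E * x1 + wa4 E - wa1 E * y1) / (2 * y1 + wa1 E * x1 + wa3 E),
            (wa4 E * x1 + 2 * wa6 E - wa3 E * y1 - x1^3) / (2 * y1 + wa1 E * x1 + wa3 E))
         else ((y2 - y1) / (x2 - x1), (y1 * x2 - y2 * x1) / (x2 - x1)));
          x3 = l^2 + wa1 E * l - wa2 E - x1 - x2
      in Pt x3 (- (l + wa1 E) * x3 - nu - wa3 E))))"

definition frob :: "nat \<Rightarrow> 'k::field ecpt \<Rightarrow> 'k ecpt" where
  "frob q P = (case P of Inf \<Rightarrow> Inf | Pt x y \<Rightarrow> Pt (x ^ q) (y ^ q))"

definition egroup :: "'k::field weier \<Rightarrow> 'k set \<Rightarrow> 'k ecpt monoid" where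
  "egroup E K = \<lparr>carrier = points E K, monoid.mult = eadd E, one = Inf\<rparr>"

definition wpoly :: "'k::field weier \<Rightarrow> 'k bipoly" where
  "wpoly E = varY^2 + cst (wa1 E) * varX * varY + cst (wa3 E) * varY
             - varX^3 - cst (wa2 E) * varX^2 - cst (wa4 E) * varX - cst (wa6 E)"

text \<open>Chart at infinity: u = x/y, w = 1/y (u plays the role of varX, w of varY);
the point at infinity is (u,w) = (0,0).\<close>
definition wpoly_inf :: "'k::field weier \<Rightarrow> 'k bipoly" where
  "wpoly_inf E = varY + cst (wa1 E) * varX * varY + cst (wa3 E) * varY^2
             - varX^3 - cst (wa2 E) * varX^2 * varY - cst (wa4 E) * varX * varY^2
             - cst (wa6 E) * varY^3"

text \<open>An upper bound d on the total degree of g.\<close>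
definition tdeg :: "'k::zero bipoly \<Rightarrow> nat" where
  "tdeg g = degree g + (MAX j \<in> {..degree g}. degree (coeff g j))"

text \<open>Homogenisation: g(x,y) = G(u,w) / w^d with d = tdeg g.\<close>
definition homog :: "'k::comm_ring_1 bipoly \<Rightarrow> 'k bipoly" where
  "homog g = (\<Sum>j\<le>degree g. \<Sum>i\<le>degree (coeff g j).
                 monom (monom (coeff (coeff g j) i) i) (tdeg g - i - j))"

definition ord_poly :: "'k::field weier \<Rightarrow> 'k ecpt \<Rightarrow> 'k bipoly \<Rightarrow> int" where
  "ord_poly E P g = (case P of
      Pt a b \<Rightarrow> int (the_enat (ordp (wpoly E) a b g))
    | Inf \<Rightarrow> int (the_enat (ordp (wpoly_inf E) 0 0 (homog g)))
             - int (tdeg g) * int (the_enat (ordp (wpoly_inf E) 0 0 varY)))"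

text \<open>A rational function f = g/h (h not vanishing identically on E) is nonzero iff
W does not divide g; its order at P is ord_P(g) - ord_P(h).\<close>
definition ord_fun :: "'k::field weier \<Rightarrow> 'k ecpt \<Rightarrow> 'k bipoly \<Rightarrow> 'k bipoly \<Rightarrow> int" where
  "ord_fun E P g h = ord_poly E P g - ord_poly E P h"

text \<open>Representatives (g,h) of elements of F_q(E) (coefficients in K = F_q).\<close>
definition ratfun :: "'k::field weier \<Rightarrow> 'k set \<Rightarrow> 'k bipoly \<Rightarrow> 'k bipoly \<Rightarrow> bool" where
  "ratfun E K g h \<longleftrightarrow> coeffs_in K g \<and> coeffs_in K h \<and> \<not> wpoly E dvd h"

text \<open>Membership in L(D): f = 0, or div(f) \<ge> -D at every point of E over the
(algebraically closed) ambient field.\<close>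
definition in_LD :: "'k::field weier \<Rightarrow> 'k set \<Rightarrow> ('k ecpt \<Rightarrow> int) \<Rightarrow> 'k bipoly \<Rightarrow> 'k bipoly \<Rightarrow> bool" where
  "in_LD E K D g h \<longleftrightarrow> ratfun E K g h \<and>
     (wpoly E dvd g \<or> (\<forall>P \<in> points E UNIV. ord_fun E P g h \<ge> - D P))"

text \<open>Value f(P) at a point where f is regular: the unique c with
f - c = 0 or ord_P(f - c) > 0.\<close>
definition fval :: "'k::field weier \<Rightarrow> 'k ecpt \<Rightarrow> 'k bipoly \<Rightarrow> 'k bipoly \<Rightarrow> 'k" where
  "fval E P g h = (THE c. wpoly E dvd (g - cst c * h) \<or>
                          ord_poly E P (g - cst c * h) > ord_poly E P h)"

text \<open>The AG code C(E,P,D); a codeword is a vector indexed by the points of P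
(set to 0 outside P).\<close>
definition ag_code :: "'k::field weier \<Rightarrow> 'k set \<Rightarrow> 'k ecpt set \<Rightarrow> ('k ecpt \<Rightarrow> int) \<Rightarrow> ('k ecpt \<Rightarrow> 'k) set" where
  "ag_code E K PP D = {c. \<exists>g h. in_LD E K D g h \<and>
      c = (\<lambda>P. if P \<in> PP then fval E P g h else 0)}"

definition hweight :: "'k ecpt set \<Rightarrow> ('k ecpt \<Rightarrow> 'k::zero) \<Rightarrow> nat" where
  "hweight PP c = card {P \<in> PP. c P \<noteq> 0}"

definition weight_count :: "('k ecpt \<Rightarrow> 'k::zero) set \<Rightarrow> 'k ecpt set \<Rightarrow> nat \<Rightarrow> nat" where
  "weight_count C PP w = card {c \<in> C. hweight PP c = w}"

definition alg_closed_type :: "'k::field itself \<Rightarrow> bool" where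
  "alg_closed_type _ \<longleftrightarrow> (\<forall>f :: 'k poly. degree f > 0 \<longrightarrow> (\<exists>x. poly f x = 0))"

end

theory Submission
  imports Defs "HOL-Computational_Algebra.Formal_Laurent_Series" "HOL-Computational_Algebra.Primes"
begin

unbundle fps_syntax


lemma hom_sum_gen: assumes "f 0 = 0" "\<And>a b. f (a+b) = f a + f b" shows "f (sum g A) = sum (\<lambda>x. f (g x)) A"
  by (induction A rule: infinite_finite_induct) (auto simp: assms)

lemma map_poly_hom_add: assumes "f 0 = 0" "\<And>a b. f (a+b) = f a + f b"
  shows "map_poly f (p + q) = map_poly f p + map_poly f q"
  by (rule poly_eqI) (simp add: coeff_map_poly assms)

lemma map_poly_hom_mult:
  fixes f :: "'a::comm_semiring_1 \<Rightarrow> 'b::comm_semiring_1"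
  assumes "f 0 = 0" "\<And>a b. f (a+b) = f a + f b" "\<And>a b. f (a*b) = f a * f b"
  shows "map_poly f (p * q) = map_poly f p * map_poly f q"
  by (rule poly_eqI) (simp add: coeff_map_poly assms coeff_mult hom_sum_gen[of f])

definition evx :: "'k::field poly \<Rightarrow> 'k fls \<Rightarrow> 'k fls" where
  "evx c x = poly (map_poly fls_const c) x"

definition ev2 :: "'k::field bipoly \<Rightarrow> 'k fls \<Rightarrow> 'k fls \<Rightarrow> 'k fls" where
  "ev2 G x y = poly (map_poly (\<lambda>c. evx c x) G) y"

lemma evx_add [simp]: "evx (p + q) x = evx p x + evx q x"
  unfolding evx_def by (subst map_poly_hom_add) (auto simp: fls_plus_const[symmetric])

lemma evx_mult [simp]: "evx (p * q) x = evx p x * evx q x"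
  unfolding evx_def by (subst map_poly_hom_mult) (auto simp: fls_plus_const[symmetric])

lemma evx_0 [simp]: "evx 0 x = 0" by (simp add: evx_def)

lemma evx_minus [simp]: "evx (- p) x = - evx p x"
proof -
  have "evx (-p + p) x = 0" by simp
  then show ?thesis by (simp only: evx_add) (simp add: add_eq_0_iff)
qed

lemma evx_diff [simp]: "evx (p - q) x = evx p x - evx q x"
  using evx_add[of p "-q" x] by simp

lemma evx_pCons [simp]: "evx (pCons c p) x = fls_const c + x * evx p x"
  by (simp add: evx_def map_poly_pCons)

lemma evx_const [simp]: "evx [:c:] x = fls_const c"
  by simp

lemma evx_1 [simp]: "evx 1 x = 1"
  by (simp add: one_pCons)

lemma evx_power [simp]: "evx (p ^ n) x = evx p x ^ n"
  by (induction n) auto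

lemma evx_sum: "evx (sum f A) x = (\<Sum>a\<in>A. evx (f a) x)"
  by (induction A rule: infinite_finite_induct) auto

lemma evx_prod: "evx (prod f A) x = (\<Prod>a\<in>A. evx (f a) x)"
  by (induction A rule: infinite_finite_induct) auto

lemma ev2_add [simp]: "ev2 (p + q) x y = ev2 p x y + ev2 q x y"
  unfolding ev2_def by (subst map_poly_hom_add) auto

lemma ev2_mult [simp]: "ev2 (p * q) x y = ev2 p x y * ev2 q x y"
  unfolding ev2_def by (subst map_poly_hom_mult) auto

lemma ev2_0 [simp]: "ev2 0 x y = 0" by (simp add: ev2_def)

lemma ev2_minus [simp]: "ev2 (- p) x y = - ev2 p x y"
proof -
  have "ev2 (-p + p) x y = 0" by simp
  then show ?thesis by (simp only: ev2_add) (simp add: add_eq_0_iff)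
qed

lemma ev2_diff [simp]: "ev2 (p - q) x y = ev2 p x y - ev2 q x y"
  using ev2_add[of p "-q" x y] by simp

lemma ev2_pCons [simp]: "ev2 (pCons c p) x y = evx c x + y * ev2 p x y"
  by (simp add: ev2_def map_poly_pCons)

lemma ev2_1 [simp]: "ev2 1 x y = 1"
  by (simp add: one_pCons)

lemma ev2_power [simp]: "ev2 (p ^ n) x y = ev2 p x y ^ n"
  by (induction n) auto

lemma ev2_sum: "ev2 (sum f A) x y = (\<Sum>a\<in>A. ev2 (f a) x y)"
  by (induction A rule: infinite_finite_induct) auto

lemma ev2_prod: "ev2 (prod f A) x y = (\<Prod>a\<in>A. ev2 (f a) x y)"
  by (induction A rule: infinite_finite_induct) auto

lemma ev2_cst [simp]: "ev2 (cst c) x y = fls_const c"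
  by (simp add: cst_def)

lemma ev2_varX [simp]: "ev2 varX x y = x"
  by (simp add: varX_def)

lemma ev2_varY [simp]: "ev2 varY x y = y"
  by (simp add: varY_def)

lemma ev2_const_poly [simp]: "ev2 [:c:] x y = evx c x"
  by simp

lemma ev2_monom_monom: "ev2 (monom (monom c i) j) x y = fls_const c * x ^ i * y ^ j"
by (simp add: ev2_def evx_def map_poly_monom poly_monom)


definition ge_ord :: "int \<Rightarrow> 'k::field fls \<Rightarrow> bool" where
  "ge_ord n f \<longleftrightarrow> (\<forall>i<n. f $$ i = 0)"

lemma ge_ord_iff: "ge_ord n f \<longleftrightarrow> (f = 0 \<or> n \<le> fls_subdegree f)"
  unfolding ge_ord_def
  by (metis fls_eq0_below_subdegree fls_subdegree_geI fls_zero_nth leD order_less_le_trans linorder_not_le)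

lemma ge_ord_0f [simp]: "ge_ord n 0" by (simp add: ge_ord_def)

lemma ge_ord_mono: "m \<le> n \<Longrightarrow> ge_ord n f \<Longrightarrow> ge_ord m f"
  by (auto simp: ge_ord_def)

lemma ge_ord_add: "ge_ord n f \<Longrightarrow> ge_ord n g \<Longrightarrow> ge_ord n (f + g)"
  by (auto simp: ge_ord_def)

lemma ge_ord_minus: "ge_ord n f \<Longrightarrow> ge_ord n (- f)"
  by (auto simp: ge_ord_def)

lemma ge_ord_diff: "ge_ord n f \<Longrightarrow> ge_ord n g \<Longrightarrow> ge_ord n (f - g)"
  by (auto simp: ge_ord_def)

lemma ge_ord_mult: "ge_ord n f \<Longrightarrow> ge_ord m g \<Longrightarrow> ge_ord (n + m) (f * g)"
  unfolding ge_ord_iff by (cases "f = 0"; cases "g = 0") auto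

lemma ge_ord_mult': "ge_ord n f \<Longrightarrow> ge_ord m g \<Longrightarrow> k \<le> n + m \<Longrightarrow> ge_ord k (f * g)"
  using ge_ord_mono ge_ord_mult by blast

lemma ge_ord_const [simp]: "ge_ord 0 (fls_const c)"
  by (simp add: ge_ord_def)

lemma ge_ord_one [simp]: "ge_ord 0 1"
  by (simp add: ge_ord_def)

lemma ge_ord_X [simp]: "ge_ord 1 fls_X"
  by (simp add: ge_ord_def)

lemma ge_ord_power: "ge_ord n f \<Longrightarrow> ge_ord (int k * n) (f ^ k)"
proof (induction k)
  case 0 then show ?case by simp
next
  case (Suc k)
  then have "ge_ord (n + int k * n) (f * f ^ k)" using ge_ord_mult by blast
  then show ?case by (simp add: algebra_simps)
qed

lemma ge_ord_sum: "(\<And>a. a \<in> A \<Longrightarrow> ge_ord n (f a)) \<Longrightarrow> ge_ord n (sum f A)"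
  by (induction A rule: infinite_finite_induct) (auto intro: ge_ord_add)

lemma ge_ord_all: assumes "\<And>n. ge_ord n f" shows "f = 0"
proof (rule ccontr)
  assume "f \<noteq> 0"
  then have "fls_subdegree f + 1 \<le> fls_subdegree f" using assms[of "fls_subdegree f + 1"] by (simp add: ge_ord_iff)
  then show False by simp
qed

lemma ge_ord_nat_all: "(\<And>n::nat. ge_ord (int n) f) \<Longrightarrow> f = 0"
  by (metis ge_ord_all ge_ord_mono nat_le_iff order_refl)

abbreviation reg :: "'k::field fls \<Rightarrow> bool" where "reg f \<equiv> ge_ord 0 f"

lemma reg_nth0_mult:
  assumes "reg f" "reg g" shows "(f * g) $$ 0 = f $$ 0 * g $$ 0"
proof -
  have f: "f = fps_to_fls (fls_regpart f)" and g: "g = fps_to_fls (fls_regpart g)"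
    using assms by (auto simp: ge_ord_iff)
  have "(f * g) $$ 0 = fps_to_fls (fls_regpart f * fls_regpart g) $$ 0"
    by (subst f, subst g, subst fls_times_fps_to_fls) simp
  also have "\<dots> = f $$ 0 * g $$ 0" by simp
  finally show ?thesis .
qed

lemma ge_ord1_iff: "ge_ord 1 f \<longleftrightarrow> reg f \<and> f $$ 0 = 0"
  by (auto simp: ge_ord_def) (metis int_one_le_iff_zero_less linorder_not_le order_le_less)

lemma reg_evx: "reg x \<Longrightarrow> reg (evx p x)"
  by (induction p) (auto intro!: ge_ord_add ge_ord_mult'[where n=0 and m=0])

lemma reg_ev2: "reg x \<Longrightarrow> reg y \<Longrightarrow> reg (ev2 G x y)"
  by (induction G) (auto intro!: ge_ord_add ge_ord_mult'[where n=0 and m=0] reg_evx)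

lemma evx_nth0: "reg x \<Longrightarrow> evx p x $$ 0 = poly p (x $$ 0)"
  by (induction p) (auto simp: reg_nth0_mult reg_evx)

lemma eval2_pCons [simp]: "eval2 (pCons c G) a b = poly c a + b * eval2 G a b"
  by (simp add: eval2_def map_poly_pCons)

lemma eval2_0 [simp]: "eval2 0 a b = 0" by (simp add: eval2_def)

lemma ev2_nth0: "reg x \<Longrightarrow> reg y \<Longrightarrow> ev2 G x y $$ 0 = eval2 G (x $$ 0) (y $$ 0)"
  by (induction G) (auto simp: reg_nth0_mult reg_ev2 reg_evx evx_nth0)

lemma eval2_alt: "eval2 G a b = poly (poly G [:b:]) a"
  by (induction G) auto

lemma eval2_add [simp]: "eval2 (G + H) a b = eval2 G a b + eval2 H a b"
  by (simp add: eval2_alt)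
lemma eval2_mult [simp]: "eval2 (G * H) a b = eval2 G a b * eval2 H a b"
  by (simp add: eval2_alt)
lemma eval2_diff [simp]: "eval2 (G - H) a b = eval2 G a b - eval2 H a b"
  by (simp add: eval2_alt)
lemma eval2_minus [simp]: "eval2 (- G) a b = - eval2 G a b"
  by (simp add: eval2_alt)
lemma eval2_power [simp]: "eval2 (G ^ n) a b = eval2 G a b ^ n"
  by (simp add: eval2_alt)
lemma eval2_cst [simp]: "eval2 (cst c) a b = c"
  by (simp add: eval2_alt cst_def)
lemma eval2_varX [simp]: "eval2 varX a b = a"
  by (simp add: eval2_alt varX_def)
lemma eval2_varY [simp]: "eval2 varY a b = b"
  by (simp add: eval2_alt varY_def)
lemma eval2_1 [simp]: "eval2 1 a b = 1"
  by (simp add: eval2_alt)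
lemma eval2_sum: "eval2 (sum f A) a b = (\<Sum>x\<in>A. eval2 (f x) a b)"
  by (induction A rule: infinite_finite_induct) auto

lemma bipoly_factor:
  fixes G :: "'k::field bipoly"
  shows "\<exists>C D. G = cst (eval2 G a b) + (varX - cst a) * C + (varY - cst b) * D"
proof -
  define G' where "G' = poly G [:b:]"
  have "poly (G - [:G':]) [:b:] = 0" by (simp add: G'_def)
  then obtain D where D: "G - [:G':] = [:- [:b:], 1:] * D"
    by (metis dvdE poly_eq_0_iff_dvd)
  have "poly (G' - [:poly G' a:]) a = 0" by simp
  then obtain C0 where C0: "G' - [:poly G' a:] = [:- a, 1:] * C0"
    by (metis dvdE poly_eq_0_iff_dvd)
  have e: "eval2 G a b = poly G' a" by (simp add: eval2_alt G'_def)
  have G1: "G = [:G':] + [:- [:b:], 1:] * D" using D by (simp add: algebra_simps)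
  have G'eq: "G' = [:poly G' a:] + [:- a, 1:] * C0" using C0 by (simp add: algebra_simps)
  have G2: "[:G':] = [:[:poly G' a:]:] + [:[:- a, 1:]:] * [:C0:]"
    by (subst G'eq) simp
  have X: "[:[:- a, 1:]:] = varX - cst a" by (simp add: varX_def cst_def)
  have Y: "[:- [:b:], 1:] = (varY - cst b :: 'k bipoly)" by (simp add: varY_def cst_def)
  have "G = [:G':] + [:- [:b:], 1:] * D" by (fact G1)
  also have "\<dots> = [:[:poly G' a:]:] + [:[:- a, 1:]:] * [:C0:] + [:- [:b:], 1:] * D" by (simp only: G2)
  also have "\<dots> = cst (eval2 G a b) + (varX - cst a) * [:C0:] + (varY - cst b) * D" by (simp only: X Y e cst_def)
  finally have "G = cst (eval2 G a b) + (varX - cst a) * [:C0:] + (varY - cst b) * D" .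
  then show ?thesis by blast
qed

lemma ev2_diff_factor:
  assumes "reg x" "reg y1" "reg y2"
  shows "\<exists>r. reg r \<and> ev2 G x y1 - ev2 G x y2 = (y1 - y2) * r"
proof (induction G)
  case 0 show ?case by (intro exI[of _ 0]) simp
next
  case (pCons c G)
  then obtain r where r: "reg r" "ev2 G x y1 - ev2 G x y2 = (y1 - y2) * r" by blast
  have "(y1 - y2) * (ev2 G x y1 + y2 * r) = (y1 - y2) * ev2 G x y1 + y2 * ((y1 - y2) * r)"
    by (simp add: algebra_simps)
  also have "\<dots> = (y1 - y2) * ev2 G x y1 + y2 * (ev2 G x y1 - ev2 G x y2)" by (simp only: r(2))
  also have "\<dots> = ev2 (pCons c G) x y1 - ev2 (pCons c G) x y2" by (simp add: algebra_simps)
  finally have "ev2 (pCons c G) x y1 - ev2 (pCons c G) x y2 = (y1 - y2) * (ev2 G x y1 + y2 * r)" ..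
  moreover have "reg (ev2 G x y1 + y2 * r)"
    using assms r(1) by (auto intro!: ge_ord_add ge_ord_mult'[where n=0 and m=0] reg_ev2)
  ultimately show ?case by blast
qed


definition closedK :: "'k::field set \<Rightarrow> bool" where
  "closedK K \<longleftrightarrow> 0 \<in> K \<and> 1 \<in> K \<and> (\<forall>x\<in>K. \<forall>y\<in>K. x + y \<in> K \<and> x * y \<in> K) \<and>
     (\<forall>x\<in>K. - x \<in> K \<and> inverse x \<in> K)"

lemma closedK_UNIV: "closedK UNIV" by (simp add: closedK_def)

lemma closedK_simps:
  assumes "closedK K"
  shows "0 \<in> K" "1 \<in> K" "x \<in> K \<Longrightarrow> y \<in> K \<Longrightarrow> x + y \<in> K" "x \<in> K \<Longrightarrow> y \<in> K \<Longrightarrow> x * y \<in> K"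
    "x \<in> K \<Longrightarrow> - x \<in> K" "x \<in> K \<Longrightarrow> inverse x \<in> K"
    "x \<in> K \<Longrightarrow> y \<in> K \<Longrightarrow> x - y \<in> K" "x \<in> K \<Longrightarrow> y \<in> K \<Longrightarrow> x / y \<in> K"
proof -
  note a = assms[unfolded closedK_def]
  show "0 \<in> K" "1 \<in> K" using a by blast+
  show "x \<in> K \<Longrightarrow> y \<in> K \<Longrightarrow> x + y \<in> K" "x \<in> K \<Longrightarrow> y \<in> K \<Longrightarrow> x * y \<in> K"
    "x \<in> K \<Longrightarrow> - x \<in> K" "x \<in> K \<Longrightarrow> inverse x \<in> K" using a by blast+
  show "x \<in> K \<Longrightarrow> y \<in> K \<Longrightarrow> x - y \<in> K" using a by (metis diff_conv_add_uminus)
  show "x \<in> K \<Longrightarrow> y \<in> K \<Longrightarrow> x / y \<in> K" using a by (metis divide_inverse)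
qed

lemma sum_in_K: "closedK K \<Longrightarrow> (\<And>a. a \<in> A \<Longrightarrow> f a \<in> K) \<Longrightarrow> sum f A \<in> K"
  by (induction A rule: infinite_finite_induct) (auto simp: closedK_simps)

lemma power_in_K: "closedK K \<Longrightarrow> x \<in> K \<Longrightarrow> x ^ n \<in> K"
  by (induction n) (auto simp: closedK_simps)

definition Kc :: "'k::field set \<Rightarrow> 'k fls \<Rightarrow> bool" where
  "Kc K f \<longleftrightarrow> (\<forall>n. f $$ n \<in> K)"

lemma Kc_0 [simp]: "closedK K \<Longrightarrow> Kc K 0" by (simp add: Kc_def closedK_simps)
lemma Kc_1 [simp]: "closedK K \<Longrightarrow> Kc K 1" by (simp add: Kc_def closedK_simps fls_one_nth)
lemma Kc_const: "closedK K \<Longrightarrow> c \<in> K \<Longrightarrow> Kc K (fls_const c)" by (simp add: Kc_def closedK_simps)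
lemma Kc_X [simp]: "closedK K \<Longrightarrow> Kc K fls_X" by (simp add: Kc_def closedK_simps)
lemma Kc_add: "closedK K \<Longrightarrow> Kc K f \<Longrightarrow> Kc K g \<Longrightarrow> Kc K (f + g)"
  by (simp add: Kc_def closedK_simps)
lemma Kc_minus: "closedK K \<Longrightarrow> Kc K f \<Longrightarrow> Kc K (- f)"
  by (simp add: Kc_def closedK_simps)
lemma Kc_diff: "closedK K \<Longrightarrow> Kc K f \<Longrightarrow> Kc K g \<Longrightarrow> Kc K (f - g)"
  by (simp add: Kc_def closedK_simps)
lemma Kc_mult: assumes "closedK K" "Kc K f" "Kc K g" shows "Kc K (f * g)"
  unfolding Kc_def
proof
  fix n
  show "(f * g) $$ n \<in> K" unfolding fls_times_nth(2)
    using assms by (intro sum_in_K) (auto simp: Kc_def intro!: closedK_simps(4))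
qed
lemma Kc_power: "closedK K \<Longrightarrow> Kc K f \<Longrightarrow> Kc K (f ^ n)"
  by (induction n) (auto intro: Kc_mult)
lemma Kc_sum: "closedK K \<Longrightarrow> (\<And>a. a \<in> A \<Longrightarrow> Kc K (f a)) \<Longrightarrow> Kc K (sum f A)"
  by (induction A rule: infinite_finite_induct) (auto intro: Kc_add)

lemma Kc_evx: "closedK K \<Longrightarrow> (\<And>i. coeff p i \<in> K) \<Longrightarrow> Kc K x \<Longrightarrow> Kc K (evx p x)"
proof (induction p)
  case 0 then show ?case by simp
next
  case (pCons c p)
  have "c \<in> K" using pCons.prems(2)[of 0] by simp
  moreover have "\<And>i. coeff p i \<in> K" using pCons.prems(2)[of "Suc i" for i] by simp
  ultimately show ?case using pCons by (auto intro!: Kc_add Kc_mult Kc_const)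
qed

lemma Kc_ev2: "closedK K \<Longrightarrow> coeffs_in K G \<Longrightarrow> Kc K x \<Longrightarrow> Kc K y \<Longrightarrow> Kc K (ev2 G x y)"
proof (induction G)
  case 0 then show ?case by simp
next
  case (pCons c G)
  have "\<And>i. coeff c i \<in> K" using pCons.prems(2) unfolding coeffs_in_def by (metis coeff_pCons_0)
  moreover have "coeffs_in K G" using pCons.prems(2) unfolding coeffs_in_def by (metis coeff_pCons_Suc)
  ultimately show ?case using pCons by (auto intro!: Kc_add Kc_mult Kc_evx)
qed

lemma hensel:
  fixes F A B :: "'k::field bipoly"
  assumes K: "closedK K" and aK: "a \<in> K" and bK: "b \<in> K" and FK: "coeffs_in K F"
    and dec: "F = (varY - cst b) * A + (varX - cst a) * B"
    and c0: "eval2 A a b \<noteq> 0" "eval2 A a b \<in> K"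
  shows "\<exists>z. ge_ord 1 z \<and> Kc K z \<and> ev2 F (fls_const a + fls_X) (fls_const b + z) = 0"
proof -
  define c where "c = eval2 A a b"
  define xx :: "'k fls" where "xx = fls_const a + fls_X"
  define Phi where "Phi z = ev2 F xx (fls_const b + z)" for z
  define T where "T z = z - fls_const (inverse c) * Phi z" for z
  have regxx: "reg xx" by (simp add: xx_def ge_ord_add ge_ord_mono[of 0 1])
  have xx0: "xx $$ 0 = a" by (simp add: xx_def)
  have Kxx: "Kc K xx" using K aK by (simp add: xx_def Kc_add Kc_const)
  have regb: "reg (fls_const b + z)" if "ge_ord 1 z" for z
    using ge_ord_add[OF ge_ord_const ge_ord_mono[OF _ that]] by simp
  have b0: "(fls_const b + z) $$ 0 = b" if "ge_ord 1 z" for z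
    using that by (simp add: ge_ord1_iff)
  have Phi_dec: "Phi z = z * ev2 A xx (fls_const b + z) + fls_X * ev2 B xx (fls_const b + z)" for z
    unfolding Phi_def by (subst dec) (simp add: xx_def)
  have contr: "ge_ord (n + 1) (T z1 - T z2)"
    if z1: "ge_ord 1 z1" and z2: "ge_ord 1 z2" and n: "ge_ord n (z1 - z2)" for z1 z2 n
  proof -
    obtain rA where rA: "reg rA" "ev2 A xx (fls_const b + z1) - ev2 A xx (fls_const b + z2) = (z1 - z2) * rA"
      using ev2_diff_factor[OF regxx regb[OF z1] regb[OF z2], of A] by auto
    obtain rB where rB: "reg rB" "ev2 B xx (fls_const b + z1) - ev2 B xx (fls_const b + z2) = (z1 - z2) * rB"
      using ev2_diff_factor[OF regxx regb[OF z1] regb[OF z2], of B] by auto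
    define A1 where "A1 = ev2 A xx (fls_const b + z1)"
    define A2 where "A2 = ev2 A xx (fls_const b + z2)"
    define B1 where "B1 = ev2 B xx (fls_const b + z1)"
    define B2 where "B2 = ev2 B xx (fls_const b + z2)"
    have eA: "A1 - A2 = (z1 - z2) * rA" using rA by (simp add: A1_def A2_def)
    have eB: "B1 - B2 = (z1 - z2) * rB" using rB by (simp add: B1_def B2_def)
    have "Phi z1 - Phi z2 = (z1 - z2) * A1 + z2 * (A1 - A2) + fls_X * (B1 - B2)"
      unfolding Phi_dec A1_def A2_def B1_def B2_def by (simp add: algebra_simps)
    also have "\<dots> = (z1 - z2) * (A1 + z2 * rA + fls_X * rB)"
      unfolding eA eB by (simp add: algebra_simps)
    finally have ePhi: "Phi z1 - Phi z2 = (z1 - z2) * (A1 + z2 * rA + fls_X * rB)" .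
    define M where "M = 1 - fls_const (inverse c) * (A1 + z2 * rA + fls_X * rB)"
    have "T z1 - T z2 = (z1 - z2) - fls_const (inverse c) * (Phi z1 - Phi z2)"
      unfolding T_def by (simp add: algebra_simps)
    also have "\<dots> = (z1 - z2) * M" unfolding ePhi M_def by (simp add: algebra_simps)
    finally have eT: "T z1 - T z2 = (z1 - z2) * M" .
    have regA1: "reg A1" unfolding A1_def by (rule reg_ev2[OF regxx regb[OF z1]])
    have A10: "A1 $$ 0 = c" unfolding A1_def c_def
      using z1 by (simp add: ev2_nth0[OF regxx regb[OF z1]] xx0 ge_ord1_iff)
    have o1: "ge_ord 1 (z2 * rA)" using ge_ord_mult[OF z2 rA(1)] by simp
    have o2: "ge_ord 1 (fls_X * rB)" using ge_ord_mult[OF ge_ord_X rB(1)] by simp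
    have regS: "reg (A1 + z2 * rA + fls_X * rB)"
      using ge_ord_add[OF ge_ord_add[OF regA1 ge_ord_mono[OF _ o1]] ge_ord_mono[OF _ o2]] by simp
    have S0: "(A1 + z2 * rA + fls_X * rB) $$ 0 = c"
      using A10 o1 o2 by (simp add: ge_ord1_iff)
    have "reg M" unfolding M_def
      using regS by (auto intro!: ge_ord_diff ge_ord_mult'[where n=0 and m=0])
    moreover have "M $$ 0 = 0" unfolding M_def
      using regS S0 c0 by (simp add: reg_nth0_mult c_def)
    ultimately have "ge_ord 1 M" by (simp add: ge_ord1_iff)
    then show ?thesis unfolding eT using ge_ord_mult[OF n] by blast
  qed
  have Tord: "ge_ord 1 (T z)" if z: "ge_ord 1 z" for z
  proof -
    have F0: "eval2 F a b = 0" by (subst dec) simp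
    have regP: "reg (Phi z)" unfolding Phi_def by (rule reg_ev2[OF regxx regb[OF z]])
    have P0: "Phi z $$ 0 = 0" unfolding Phi_def
      using z by (simp add: ev2_nth0[OF regxx regb[OF z]] xx0 ge_ord1_iff F0)
    have "reg (T z)" unfolding T_def
      using ge_ord_diff[OF ge_ord_mono[OF _ z] ge_ord_mult'[OF ge_ord_const regP]] by simp
    moreover have "T z $$ 0 = 0" unfolding T_def using z regP P0
      by (simp add: reg_nth0_mult ge_ord1_iff)
    ultimately show ?thesis by (simp add: ge_ord1_iff)
  qed
  have TK: "Kc K (T z)" if "Kc K z" for z
    unfolding T_def Phi_def using that K FK Kxx bK c0 unfolding c_def
    by (intro Kc_diff Kc_mult Kc_const Kc_ev2 Kc_add) (auto simp: closedK_simps)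
  define zs where "zs n = (T ^^ n) 0" for n
  have zs_suc: "zs (Suc n) = T (zs n)" for n by (simp add: zs_def)
  have zs1: "ge_ord 1 (zs n)" for n by (induction n) (auto simp: zs_def Tord)
  have zsK: "Kc K (zs n)" for n by (induction n) (auto simp: zs_def TK K)
  have step: "ge_ord (int n + 1) (zs (Suc n) - zs n)" for n
  proof (induction n)
    case 0 then show ?case using zs1[of 1] by (simp add: zs_def)
  next
    case (Suc n)
    have "ge_ord ((int n + 1) + 1) (T (zs (Suc n)) - T (zs n))"
      by (rule contr[OF zs1 zs1 Suc])
    then show ?case by (simp add: zs_suc add.commute add.left_commute)
  qed
  have stab: "ge_ord (int j + 1) (zs m - zs j)" if "j \<le> m" for j m
    using that
  proof (induction m)
    case 0 then show ?case by simp
  next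
    case (Suc m)
    show ?case
    proof (cases "j = Suc m")
      case True then show ?thesis by simp
    next
      case False
      then have "j \<le> m" using Suc by simp
      then have "ge_ord (int j + 1) (zs m - zs j)" using Suc by simp
      moreover have "ge_ord (int j + 1) (zs (Suc m) - zs m)"
        using ge_ord_mono[OF _ step[of m]] \<open>j \<le> m\<close> by simp
      ultimately have "ge_ord (int j + 1) ((zs (Suc m) - zs m) + (zs m - zs j))"
        using ge_ord_add by blast
      then show ?thesis by simp
    qed
  qed
  define z where "z = Abs_fls (\<lambda>i. if i < 0 then 0 else zs (Suc (nat i)) $$ i)"
  have znth: "z $$ i = (if i < 0 then 0 else zs (Suc (nat i)) $$ i)" for i
    unfolding z_def by (rule nth_Abs_fls_lower_bound[of 0]) simp
  have zclose: "ge_ord (int n) (z - zs n)" for n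
    unfolding ge_ord_def
  proof (intro allI impI)
    fix i assume i: "i < int n"
    show "(z - zs n) $$ i = 0"
    proof (cases "i < 0")
      case True then show ?thesis using zs1[of n] by (simp add: znth ge_ord_def)
    next
      case False
      then have "Suc (nat i) \<le> n" using i by simp
      then have "ge_ord (int (Suc (nat i)) + 1) (zs n - zs (Suc (nat i)))" by (rule stab)
      then have "(zs n - zs (Suc (nat i))) $$ i = 0" using False by (simp add: ge_ord_def)
      then show ?thesis using False by (simp add: znth)
    qed
  qed
  have z1: "ge_ord 1 z"
    unfolding ge_ord_def
  proof (intro allI impI)
    fix i :: int assume "i < 1"
    then show "z $$ i = 0"
      using zs1[of 1] by (cases "i < 0") (auto simp: znth ge_ord_def zs_def)
  qed
  have zK: "Kc K z" using zsK K unfolding Kc_def by (simp add: znth closedK_simps)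
  have "T z - z = 0"
  proof (rule ge_ord_nat_all)
    fix n :: nat
    have "ge_ord (int n + 1) (T z - T (zs n))" by (rule contr[OF z1 zs1 zclose])
    moreover have "ge_ord (int n + 1) (zs (Suc n) - z)"
      using ge_ord_minus[OF zclose[of "Suc n"]] by (simp add: add.commute)
    ultimately have "ge_ord (int n + 1) ((T z - T (zs n)) + (zs (Suc n) - z))"
      by (rule ge_ord_add)
    then have "ge_ord (int n + 1) (T z - z)" by (simp add: zs_suc)
    then show "ge_ord (int n) (T z - z)" by (rule ge_ord_mono[rotated]) simp
  qed
  then have "fls_const (inverse c) * Phi z = 0" by (simp add: T_def)
  then have "Phi z = 0" using c0 by (simp add: c_def)
  then show ?thesis using z1 zK unfolding Phi_def xx_def by blast
qed


lemma cst_add: "cst (x + y) = cst x + cst y" by (simp add: cst_def)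
lemma cst_mult: "cst (x * y) = cst x * cst y" by (simp add: cst_def)
lemma cst_diff: "cst (x - y) = cst x - cst y" by (simp add: cst_def)
lemma cst_minus: "cst (- x) = - cst x" by (simp add: cst_def)
lemma cst_0 [simp]: "cst 0 = 0" by (simp add: cst_def)
lemma cst_1 [simp]: "cst 1 = 1" by (simp add: cst_def one_pCons)
lemma cst_power: "cst (x ^ n) = cst x ^ n" by (induction n) (simp_all only: power_0 power_Suc cst_1 cst_mult)

lemma fls_X_pow_subdeg [simp]: "fls_subdegree ((fls_X::'k::field fls) ^ j) = int j"
  by (induction j) (auto simp: fls_subdegree_mult)

lemma sum_single_if: "finite A \<Longrightarrow> v \<in> A \<Longrightarrow> (\<Sum>i\<in>A. if i = v then f i else 0) = f v"
  by (simp add: sum.delta)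

lemma ordp_zero:
  assumes "eval2 G a b \<noteq> 0" "eval2 F a b = 0"
  shows "ordp F a b G = 0"
proof -
  have no: "\<not> in_mpow F a b n G" if "n > 0" for n
  proof
    assume "in_mpow F a b n G"
    then obtain h v u where h: "eval2 h a b \<noteq> 0"
      and eq: "h * G = v * F + (\<Sum>i\<le>n. u i * (varX - cst a) ^ i * (varY - cst b) ^ (n - i))"
      unfolding in_mpow_def by blast
    have "eval2 (h * G) a b = 0"
      unfolding eq using assms(2) that
      by (auto simp: eval2_sum intro!: sum.neutral)
    then show False using h assms(1) by simp
  qed
  have yes: "in_mpow F a b 0 G"
    unfolding in_mpow_def by (rule exI[of _ 1], rule exI[of _ 0], rule exI[of _ "\<lambda>_. G"]) simp
  have "{enat n |n. in_mpow F a b n G} = {0}"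
    using no yes by (auto simp: zero_enat_def)
  then show ?thesis unfolding ordp_def by simp
qed

lemma ordp_param:
  fixes F G A B :: "'k::field bipoly"
  assumes dec: "F = (varY - cst b) * A + (varX - cst a) * B" and A0: "eval2 A a b \<noteq> 0"
    and z: "ge_ord 1 z" and Fz: "ev2 F (fls_const a + fls_X) (fls_const b + z) = 0"
    and G: "ev2 G (fls_const a + fls_X) (fls_const b + z) \<noteq> 0"
  shows "ordp F a b G = enat (nat (fls_subdegree (ev2 G (fls_const a + fls_X) (fls_const b + z))))"
    and "0 \<le> fls_subdegree (ev2 G (fls_const a + fls_X) (fls_const b + z))"
proof -
  define xx :: "'k fls" where "xx = fls_const a + fls_X"
  define yy :: "'k fls" where "yy = fls_const b + z"
  define Phi where "Phi H = ev2 H xx yy" for H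
  have regxx: "reg xx" unfolding xx_def using ge_ord_add[OF ge_ord_const ge_ord_mono[OF _ ge_ord_X]] by simp
  have regyy: "reg yy" unfolding yy_def using ge_ord_add[OF ge_ord_const ge_ord_mono[OF _ z]] by simp
  have xx0: "xx $$ 0 = a" by (simp add: xx_def)
  have yy0: "yy $$ 0 = b" using z by (simp add: yy_def ge_ord1_iff)
  have Phi0: "Phi H $$ 0 = eval2 H a b" for H
    unfolding Phi_def by (simp add: ev2_nth0[OF regxx regyy] xx0 yy0)
  have regPhi: "reg (Phi H)" for H unfolding Phi_def by (rule reg_ev2[OF regxx regyy])
  have PhiX: "Phi (varX - cst a) = fls_X" by (simp add: Phi_def xx_def)
  have PhiY: "Phi (varY - cst b) = z" by (simp add: Phi_def yy_def)
  have PhiF: "Phi F = 0" using Fz by (simp add: Phi_def xx_def yy_def)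
  have unit_sub: "fls_subdegree (Phi H) = 0" if "eval2 H a b \<noteq> 0" for H
    using that regPhi[of H] Phi0[of H]
    by (metis fls_subdegree_eqI ge_ord_def)
  have unit_nz: "Phi H \<noteq> 0" if "eval2 H a b \<noteq> 0" for H
    using that Phi0[of H] by auto
  define v where "v = fls_subdegree (Phi G)"
  have v0: "0 \<le> v" using regPhi[of G] G by (simp add: v_def ge_ord_iff Phi_def xx_def yy_def)
  have GPhi: "Phi G \<noteq> 0" using G by (simp add: Phi_def xx_def yy_def)
  have upper: "int n \<le> v" if im: "in_mpow F a b n G" for n
  proof -
    obtain h V u where h: "eval2 h a b \<noteq> 0"
      and eq: "h * G = V * F + (\<Sum>i\<le>n. u i * (varX - cst a) ^ i * (varY - cst b) ^ (n - i))"
      using im unfolding in_mpow_def by blast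
    have "Phi (h * G) = (\<Sum>i\<le>n. Phi (u i) * fls_X ^ i * z ^ (n - i))"
      unfolding eq Phi_def using PhiF PhiX PhiY by (simp add: ev2_sum Phi_def)
    moreover have "ge_ord (int n) (\<Sum>i\<le>n. Phi (u i) * fls_X ^ i * z ^ (n - i))"
    proof (rule ge_ord_sum)
      fix i assume "i \<in> {..n}"
      then have i: "i \<le> n" by simp
      have "ge_ord (0 + int i * 1) (Phi (u i) * fls_X ^ i)"
        by (rule ge_ord_mult[OF regPhi ge_ord_power[OF ge_ord_X]])
      from ge_ord_mult[OF this ge_ord_power[OF z, of "n - i"]]
      show "ge_ord (int n) (Phi (u i) * fls_X ^ i * z ^ (n - i))" using i by simp
    qed
    ultimately have "ge_ord (int n) (Phi h * Phi G)" by (simp add: Phi_def)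
    then have "int n \<le> fls_subdegree (Phi h * Phi G)"
      using GPhi unit_nz[OF h] by (simp add: ge_ord_iff)
    then show ?thesis using GPhi unit_nz[OF h] unit_sub[OF h] by (simp add: v_def)
  qed
  have lower: "\<exists>H Gj V. eval2 H a b \<noteq> 0 \<and> H * G = (varX - cst a) ^ j * Gj + V * F"
    if "int j \<le> v" for j
    using that
  proof (induction j)
    case 0 show ?case by (rule exI[of _ 1], rule exI[of _ G], rule exI[of _ 0]) simp
  next
    case (Suc j)
    then obtain H Gj V where H: "eval2 H a b \<noteq> 0" and eq: "H * G = (varX - cst a) ^ j * Gj + V * F"
      by auto
    have "Phi H * Phi G = fls_X ^ j * Phi Gj"
      using arg_cong[OF eq, of Phi] PhiF PhiX by (simp add: Phi_def)
    note e = this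
    have nz: "Phi H * Phi G \<noteq> 0" using unit_nz[OF H] GPhi by simp
    then have GjNZ: "Phi Gj \<noteq> 0" using e by auto
    have "fls_subdegree (Phi H * Phi G) = v" using unit_nz[OF H] GPhi unit_sub[OF H] by (simp add: v_def)
    moreover have "fls_subdegree (fls_X ^ j * Phi Gj) = int j + fls_subdegree (Phi Gj)"
      using GjNZ by (simp add: fls_subdegree_mult)
    ultimately have "v = int j + fls_subdegree (Phi Gj)" using e by simp
    then have "1 \<le> fls_subdegree (Phi Gj)" using Suc.prems by simp
    then have "Phi Gj $$ 0 = 0" by simp
    then have Gj0: "eval2 Gj a b = 0" using Phi0 by simp
    obtain C D where CD: "Gj = cst (eval2 Gj a b) + (varX - cst a) * C + (varY - cst b) * D"
      using bipoly_factor by blast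
    define Xa where "Xa = varX - cst a"
    define Yb where "Yb = varY - cst b"
    have CD': "Gj = Xa * C + Yb * D" using CD Gj0 by (simp add: Xa_def Yb_def)
    have dec': "Yb * A = F - Xa * B" using dec by (simp add: Xa_def Yb_def)
    have "A * Gj = Xa * (A * C) + D * (Yb * A)" unfolding CD' by (simp add: algebra_simps)
    also have "\<dots> = Xa * (A * C - D * B) + D * F" unfolding dec' by (simp add: algebra_simps)
    finally have AG: "A * Gj = Xa * (A * C - D * B) + D * F" .
    have "(A * H) * G = A * (H * G)" by (simp add: mult.assoc)
    also have "\<dots> = Xa ^ j * (A * Gj) + (A * V) * F" unfolding eq Xa_def by (simp add: algebra_simps)
    also have "\<dots> = Xa ^ Suc j * (A * C - D * B) + (Xa ^ j * D + A * V) * F" unfolding AG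
      by (simp add: algebra_simps)
    finally have "(A * H) * G = (varX - cst a) ^ Suc j * (A * C - D * B) + ((varX - cst a) ^ j * D + A * V) * F"
      by (simp add: Xa_def)
    moreover have "eval2 (A * H) a b \<noteq> 0" using A0 H by simp
    ultimately show ?case by blast
  qed
  obtain H Gv V where H: "eval2 H a b \<noteq> 0" and eqv: "H * G = (varX - cst a) ^ nat v * Gv + V * F"
    using lower[of "nat v"] v0 by auto
  have inv: "in_mpow F a b (nat v) G"
    unfolding in_mpow_def
  proof (intro exI conjI)
    show "eval2 H a b \<noteq> 0" by (fact H)
    show "H * G = V * F + (\<Sum>i\<le>nat v. (\<lambda>i. if i = nat v then Gv else 0) i * (varX - cst a) ^ i * (varY - cst b) ^ (nat v - i))"
    proof -
      have "(\<Sum>i\<le>nat v. (\<lambda>i. if i = nat v then Gv else 0) i * (varX - cst a) ^ i * (varY - cst b) ^ (nat v - i))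
          = (\<Sum>i\<le>nat v. if i = nat v then Gv * (varX - cst a) ^ nat v else 0)"
        by (rule sum.cong) auto
      also have "\<dots> = Gv * (varX - cst a) ^ nat v" by simp
      finally show ?thesis using eqv by (simp add: algebra_simps)
    qed
  qed
  have "Sup {enat n |n. in_mpow F a b n G} = enat (nat v)"
  proof (rule antisym)
    show "Sup {enat n |n. in_mpow F a b n G} \<le> enat (nat v)"
      by (rule Sup_least) (auto dest!: upper)
    show "enat (nat v) \<le> Sup {enat n |n. in_mpow F a b n G}"
      by (rule Sup_upper) (use inv in blast)
  qed
  then show "ordp F a b G = enat (nat (fls_subdegree (ev2 G (fls_const a + fls_X) (fls_const b + z))))"
    by (simp add: ordp_def v_def Phi_def xx_def yy_def)
  show "0 \<le> fls_subdegree (ev2 G (fls_const a + fls_X) (fls_const b + z))"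
    using v0 by (simp add: v_def Phi_def xx_def yy_def)
qed


definition Kp :: "'k::field set \<Rightarrow> 'k poly \<Rightarrow> bool" where "Kp K p \<longleftrightarrow> (\<forall>i. coeff p i \<in> K)"

lemma Kp_add: "closedK K \<Longrightarrow> Kp K p \<Longrightarrow> Kp K q \<Longrightarrow> Kp K (p + q)"
  by (simp add: Kp_def closedK_simps)
lemma Kp_minus: "closedK K \<Longrightarrow> Kp K p \<Longrightarrow> Kp K (- p)"
  by (simp add: Kp_def closedK_simps)
lemma Kp_diff: "closedK K \<Longrightarrow> Kp K p \<Longrightarrow> Kp K q \<Longrightarrow> Kp K (p - q)"
  by (simp add: Kp_def closedK_simps)
lemma Kp_mult: assumes "closedK K" "Kp K p" "Kp K q" shows "Kp K (p * q)"
  unfolding Kp_def coeff_mult using assms by (auto simp: Kp_def intro!: sum_in_K closedK_simps(4))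
lemma Kp_sum: "closedK K \<Longrightarrow> (\<And>a. a \<in> A \<Longrightarrow> Kp K (f a)) \<Longrightarrow> Kp K (sum f A)"
  by (induction A rule: infinite_finite_induct) (auto intro: Kp_add simp: Kp_def closedK_simps)
lemma Kp_0: "closedK K \<Longrightarrow> Kp K 0" by (simp add: Kp_def closedK_simps)
lemma Kp_const: "closedK K \<Longrightarrow> c \<in> K \<Longrightarrow> Kp K [:c:]"
  by (simp add: Kp_def closedK_simps coeff_pCons split: nat.split)
lemma Kp_pCons: "closedK K \<Longrightarrow> c \<in> K \<Longrightarrow> Kp K p \<Longrightarrow> Kp K (pCons c p)"
  by (simp add: Kp_def coeff_pCons split: nat.split)
lemma Kp_power: "closedK K \<Longrightarrow> Kp K p \<Longrightarrow> Kp K (p ^ n)"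
  by (induction n) (auto intro: Kp_mult simp: Kp_const[of K 1, simplified] closedK_simps one_pCons)
lemma Kp_prod: "closedK K \<Longrightarrow> (\<And>a. a \<in> A \<Longrightarrow> Kp K (f a)) \<Longrightarrow> Kp K (prod f A)"
  by (induction A rule: infinite_finite_induct) (auto intro: Kp_mult simp: Kp_const[of K 1, simplified] closedK_simps one_pCons)

lemma coeffs_in_Kp: "coeffs_in K G \<longleftrightarrow> (\<forall>j. Kp K (coeff G j))"
  unfolding coeffs_in_def Kp_def by blast

lemma coeffs_in_add: "closedK K \<Longrightarrow> coeffs_in K G \<Longrightarrow> coeffs_in K H \<Longrightarrow> coeffs_in K (G + H)"
  by (simp add: coeffs_in_Kp Kp_add)
lemma coeffs_in_diff: "closedK K \<Longrightarrow> coeffs_in K G \<Longrightarrow> coeffs_in K H \<Longrightarrow> coeffs_in K (G - H)"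
  by (simp add: coeffs_in_Kp Kp_diff)
lemma coeffs_in_mult: assumes "closedK K" "coeffs_in K G" "coeffs_in K H" shows "coeffs_in K (G * H)"
  using assms unfolding coeffs_in_Kp coeff_mult by (auto intro!: Kp_sum Kp_mult)
lemma coeffs_in_0: "closedK K \<Longrightarrow> coeffs_in K 0" by (simp add: coeffs_in_Kp Kp_0)
lemma coeffs_in_const: "closedK K \<Longrightarrow> Kp K p \<Longrightarrow> coeffs_in K [:p:]"
  by (simp add: coeffs_in_Kp coeff_pCons Kp_0 split: nat.split)
lemma coeffs_in_cst: "closedK K \<Longrightarrow> c \<in> K \<Longrightarrow> coeffs_in K (cst c)"
  by (simp add: cst_def coeffs_in_const Kp_const)
lemma coeffs_in_varX: "closedK K \<Longrightarrow> coeffs_in K varX"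
  by (simp add: varX_def coeffs_in_const Kp_pCons Kp_const closedK_simps)
lemma coeffs_in_varY: "closedK K \<Longrightarrow> coeffs_in K varY"
  by (simp add: varY_def coeffs_in_Kp coeff_pCons Kp_0 Kp_const[of K 1, simplified] closedK_simps one_pCons split: nat.split)
lemma coeffs_in_power: "closedK K \<Longrightarrow> coeffs_in K G \<Longrightarrow> coeffs_in K (G ^ n)"
  by (induction n) (auto intro: coeffs_in_mult simp: coeffs_in_cst[of K 1, simplified] closedK_simps)

definition EK :: "'k::field weier \<Rightarrow> 'k set \<Rightarrow> bool" where
  "EK E K \<longleftrightarrow> wa1 E \<in> K \<and> wa2 E \<in> K \<and> wa3 E \<in> K \<and> wa4 E \<in> K \<and> wa6 E \<in> K"

lemma coeffs_in_wpoly: "closedK K \<Longrightarrow> EK E K \<Longrightarrow> coeffs_in K (wpoly E)"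
  unfolding wpoly_def EK_def
  by (intro coeffs_in_add coeffs_in_diff coeffs_in_mult coeffs_in_power coeffs_in_cst coeffs_in_varX coeffs_in_varY; simp)

lemma coeffs_in_wpoly_inf: "closedK K \<Longrightarrow> EK E K \<Longrightarrow> coeffs_in K (wpoly_inf E)"
  unfolding wpoly_inf_def EK_def
  by (intro coeffs_in_add coeffs_in_diff coeffs_in_mult coeffs_in_power coeffs_in_cst coeffs_in_varX coeffs_in_varY; simp)

definition cub :: "'k::field weier \<Rightarrow> 'k poly" where
  "cub E = [:wa6 E, wa4 E, wa2 E, 1:]"
definition lin :: "'k::field weier \<Rightarrow> 'k poly" where
  "lin E = [:wa3 E, wa1 E:]"

lemma wpoly_explicit: "wpoly E = [: - cub E, lin E, 1 :]"
  unfolding wpoly_def cub_def lin_def varX_def varY_def cst_def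
  by (simp add: power2_eq_square power3_eq_cube algebra_simps one_pCons)

lemma wpoly_dec:
  assumes "on_curve E a b"
  shows "wpoly E = (varY - cst b) * (varY + cst b + cst (wa1 E) * varX + cst (wa3 E))
     + (varX - cst a) * (cst (wa1 E * b) - (varX ^ 2 + cst a * varX + cst (a ^ 2)) - cst (wa2 E) * (varX + cst a) - cst (wa4 E))"
proof -
  have a6: "wa6 E = b^2 + wa1 E * a * b + wa3 E * b - a^3 - wa2 E * a^2 - wa4 E * a"
    using assms by (simp add: on_curve_def algebra_simps)
  show ?thesis unfolding wpoly_def a6 cst_add cst_diff cst_mult cst_power
    by algebra
qed

lemma wpoly_inf_dec:
  "wpoly_inf E = (varY - cst 0) * (1 + cst (wa1 E) * varX + cst (wa3 E) * varY - cst (wa2 E) * varX ^ 2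
      - cst (wa4 E) * varX * varY - cst (wa6 E) * varY ^ 2) + (varX - cst 0) * (- (varX ^ 2))"
  unfolding wpoly_inf_def by (simp add: algebra_simps power2_eq_square power3_eq_cube)


lemma evx_shift:
  assumes "p \<noteq> 0"
  shows "evx p (fls_const a + fls_X) \<noteq> 0 \<and> fls_subdegree (evx p (fls_const a + fls_X)) = int (order a p)"
proof -
  obtain q where q: "p = [:- a, 1:] ^ order a p * q" and nd: "\<not> [:- a, 1:] dvd q"
    using order_decomp[OF assms] by blast
  have pq: "poly q a \<noteq> 0" using nd by (simp add: poly_eq_0_iff_dvd)
  define xx :: "'a fls" where "xx = fls_const a + fls_X"
  have regxx: "reg xx" unfolding xx_def using ge_ord_add[OF ge_ord_const ge_ord_mono[OF _ ge_ord_X]] by simp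
  have lin: "evx [:- a, 1:] xx = fls_X" by (simp add: xx_def)
  have q0: "evx q xx $$ 0 = poly q a" by (simp only: evx_nth0[OF regxx]) (simp add: xx_def)
  have qnz: "evx q xx \<noteq> 0" using q0 pq by auto
  have qsub: "fls_subdegree (evx q xx) = 0"
    using q0 pq reg_evx[OF regxx, of q] by (metis fls_subdegree_eqI ge_ord_def)
  have "evx p xx = fls_X ^ order a p * evx q xx" by (subst q) (simp only: evx_mult evx_power lin)
  then show ?thesis using qnz qsub by (simp add: xx_def fls_subdegree_mult)
qed

lemma evx_neg_subdeg:
  assumes "fls_subdegree u < 0" "u \<noteq> 0" "p \<noteq> 0"
  shows "evx p u \<noteq> 0 \<and> fls_subdegree (evx p u) = int (degree p) * fls_subdegree u"
  using assms(3)
proof (induction p)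
  case 0 then show ?case by simp
next
  case (pCons c p)
  show ?case
  proof (cases "p = 0")
    case True
    then show ?thesis using pCons by simp
  next
    case False
    then have IH: "evx p u \<noteq> 0" "fls_subdegree (evx p u) = int (degree p) * fls_subdegree u"
      using pCons by auto
    have nz: "u * evx p u \<noteq> 0" using IH assms by simp
    have sd: "fls_subdegree (u * evx p u) = (int (degree p) + 1) * fls_subdegree u"
      using IH assms by (simp add: fls_subdegree_mult algebra_simps)
    have neg: "fls_subdegree (u * evx p u) < fls_subdegree (fls_const c)"
      using sd assms(1) by (simp add: mult_pos_neg)
    have e: "evx (pCons c p) u = fls_const c + u * evx p u" by simp
    have "fls_subdegree (evx (pCons c p) u) = fls_subdegree (u * evx p u)"
      unfolding e by (rule fls_subdegree_add_eq2[OF nz neg])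
    moreover have "evx (pCons c p) u \<noteq> 0"
    proof
      assume "evx (pCons c p) u = 0"
      then have "fls_const c = - (u * evx p u)" unfolding e by (simp add: eq_neg_iff_add_eq_0)
      then have "fls_subdegree (fls_const c) = fls_subdegree (u * evx p u)" by (simp add: fls_subdegree_minus)
      then show False using neg by simp
    qed
    ultimately show ?thesis using sd False by (simp add: algebra_simps)
  qed
qed

lemma evx_monom: "evx (monom c i) x = fls_const c * x ^ i"
  by (simp add: evx_def map_poly_monom poly_monom)

lemma ev2_monom: "ev2 (monom c j) x y = evx c x * y ^ j"
  by (simp add: ev2_def map_poly_monom poly_monom)

lemma evx_altdef: "evx p x = (\<Sum>i\<le>degree p. fls_const (coeff p i) * x ^ i)"
proof -
  have "evx p x = evx (\<Sum>i\<le>degree p. monom (coeff p i) i) x" by (simp add: poly_as_sum_of_monoms)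
  then show ?thesis by (simp add: evx_sum evx_monom)
qed

lemma ev2_altdef: "ev2 G x y = (\<Sum>j\<le>degree G. evx (coeff G j) x * y ^ j)"
proof -
  have "ev2 G x y = ev2 (\<Sum>i\<le>degree G. monom (coeff G i) i) x y" by (simp add: poly_as_sum_of_monoms)
  then show ?thesis by (simp add: ev2_sum ev2_monom)
qed

lemma deg_lemma:
  fixes r0 r1 c l :: "'k::field poly"
  assumes c: "degree c = 3" and l: "degree l \<le> 1"
    and eq: "r0 ^ 2 - l * r0 * r1 - c * r1 ^ 2 = 0"
  shows "r1 = 0"
proof (rule ccontr)
  assume r1: "r1 \<noteq> 0"
  have c0: "c \<noteq> 0" using c by auto
  have e: "c * r1 ^ 2 = r0 ^ 2 - l * r0 * r1" using eq by (simp add: algebra_simps)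
  have dl: "degree (c * r1 ^ 2) = 3 + 2 * degree r1"
    using c0 r1 c by (simp add: degree_mult_eq degree_power_eq)
  show False
  proof (cases "r0 = 0")
    case True then show False using e c0 r1 by simp
  next
    case r0: False
    have d2: "degree (r0 ^ 2) = 2 * degree r0" using r0 by (simp add: degree_power_eq)
    have d3: "degree (l * r0 * r1) \<le> 1 + degree r0 + degree r1"
      using l degree_mult_le[of "l * r0" r1] degree_mult_le[of l r0] by linarith
    show False
    proof (cases "degree r0 \<le> degree r1 + 1")
      case True
      have "degree (r0 ^ 2 - l * r0 * r1) \<le> 2 * degree r1 + 2"
        using True d2 d3 by (intro degree_diff_le) auto
      then show False using e dl by simp
    next
      case False
      have "degree (r0 ^ 2 - l * r0 * r1) = 2 * degree r0"
        using False d2 d3 by (subst diff_conv_add_uminus, subst degree_add_eq_left) auto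
      then show False using e dl by presburger
    qed
  qed
qed

lemma wpoly_lead: "degree (wpoly E) = 2" "coeff (wpoly E) 2 = 1"
  by (simp_all add: wpoly_explicit numeral_2_eq_2)

lemma wpoly_nz: "wpoly E \<noteq> 0"
  using wpoly_lead(2)[of E] by auto

lemma wpoly_divide:
  "\<exists>q r0 r1. G = wpoly E * q + [:r0, r1:]"
proof -
  obtain q r where pd: "pseudo_divmod G (wpoly E) = (q, r)" by fastforce
  from pseudo_divmod[OF wpoly_nz pd] have e: "G = wpoly E * q + r" and dr: "r = 0 \<or> degree r < 2"
    by (simp_all add: wpoly_lead)
  have "r = [:coeff r 0, coeff r 1:]"
    using dr by (intro poly_eqI) (auto simp: coeff_pCons coeff_eq_0 split: nat.split)
  then show ?thesis using e by metis
qed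

lemma ev2_lin2 [simp]: "ev2 [:r0, r1:] x y = evx r0 x + y * evx r1 x"
  by simp

lemma evx_cub: "evx (cub E) x = x ^ 3 + fls_const (wa2 E) * x ^ 2 + fls_const (wa4 E) * x + fls_const (wa6 E)"
  by (simp add: cub_def algebra_simps power2_eq_square power3_eq_cube)

lemma ev2_wpoly: "ev2 (wpoly E) x y = y ^ 2 + evx (lin E) x * y - evx (cub E) x"
  by (simp add: wpoly_explicit algebra_simps power2_eq_square)

lemma criterion_affine:
  assumes W: "ev2 (wpoly E) (fls_const a + fls_X) Y = 0"
    and G: "ev2 G (fls_const a + fls_X) Y = 0"
  shows "wpoly E dvd G"
proof -
  define xx :: "'a fls" where "xx = fls_const a + fls_X"
  obtain q r0 r1 where e: "G = wpoly E * q + [:r0, r1:]" using wpoly_divide by blast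
  have g: "evx r0 xx + Y * evx r1 xx = 0" using G W unfolding e xx_def by simp
  define R where "R = r0 ^ 2 - lin E * r0 * r1 - cub E * r1 ^ 2"
  have "evx R xx = evx r1 xx ^ 2 * ev2 (wpoly E) xx Y"
  proof -
    have y: "evx r1 xx * Y = - evx r0 xx" using g by (simp add: algebra_simps eq_neg_iff_add_eq_0)
    have "evx r1 xx ^ 2 * ev2 (wpoly E) xx Y
       = (evx r1 xx * Y) ^ 2 + evx (lin E) xx * evx r1 xx * (evx r1 xx * Y) - evx (cub E) xx * evx r1 xx ^ 2"
      by (simp add: ev2_wpoly algebra_simps power2_eq_square)
    also have "\<dots> = evx R xx" unfolding y R_def by (simp add: algebra_simps power2_eq_square)
    finally show ?thesis by simp
  qed
  then have "evx R xx = 0" using W by (simp add: xx_def)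
  then have R0: "R = 0" using evx_shift[of R a] by (auto simp: xx_def)
  have "r1 = 0"
    by (rule deg_lemma[of "cub E" "lin E" r0]) (use R0 in \<open>auto simp: R_def cub_def lin_def\<close>)
  then have "evx r0 xx = 0" using g by simp
  then have "r0 = 0" using evx_shift[of r0 a] by (auto simp: xx_def)
  then show ?thesis using e \<open>r1 = 0\<close> by simp
qed


definition Rp :: "'k::field fls \<Rightarrow> 'k fls \<Rightarrow> 'k \<Rightarrow> bool" where
  "Rp G H c \<longleftrightarrow> (G - fls_const c * H = 0 \<or> fls_subdegree H < fls_subdegree (G - fls_const c * H))"

lemma the_ratio:
  fixes G H :: "'k::field fls"
  assumes H: "H \<noteq> 0" and cond: "G = 0 \<or> fls_subdegree H \<le> fls_subdegree G"
  shows "(THE c. Rp G H c) = G $$ fls_subdegree H / H $$ fls_subdegree H"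
proof (rule the_equality)
  define v where "v = fls_subdegree H"
  have Hv: "H $$ v \<noteq> 0" using H by (simp add: v_def)
  define c0 where "c0 = G $$ v / H $$ v"
  have Gbelow: "G $$ n = 0" if "n < v" for n
    using cond that by (auto simp: v_def)
  show "Rp G H (G $$ fls_subdegree H / H $$ fls_subdegree H)"
    unfolding Rp_def
  proof (cases "G - fls_const c0 * H = 0")
    case True then show "G - fls_const (G $$ fls_subdegree H / H $$ fls_subdegree H) * H = 0 \<or> fls_subdegree H < fls_subdegree (G - fls_const (G $$ fls_subdegree H / H $$ fls_subdegree H) * H)" by (simp add: c0_def v_def)
  next
    case False
    have "v < fls_subdegree (G - fls_const c0 * H)"
    proof (rule fls_subdegree_greaterI[OF False])
      fix k assume "k \<le> v"
      then show "(G - fls_const c0 * H) $$ k = 0"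
        using Gbelow[of k] Hv by (cases "k = v") (auto simp: c0_def v_def)
    qed
    then show "G - fls_const (G $$ fls_subdegree H / H $$ fls_subdegree H) * H = 0 \<or> fls_subdegree H < fls_subdegree (G - fls_const (G $$ fls_subdegree H / H $$ fls_subdegree H) * H)" by (simp add: c0_def v_def)
  qed
  fix c assume R: "Rp G H c"
  have "(G - fls_const c * H) $$ v = 0"
    using R unfolding Rp_def v_def by (metis fls_eq0_below_subdegree fls_zero_nth)
  then have "G $$ v = c * H $$ v" by simp
  then show "c = G $$ fls_subdegree H / H $$ fls_subdegree H" using Hv by (simp add: v_def field_simps)
qed

lemma Rp_scale:
  fixes G H S :: "'k::field fls"
  assumes "S \<noteq> 0" "H \<noteq> 0"
  shows "Rp (S * G) (S * H) c = Rp G H c"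
proof -
  have e: "S * G - fls_const c * (S * H) = S * (G - fls_const c * H)" by (simp add: algebra_simps)
  show ?thesis unfolding Rp_def e using assms
    by (cases "G - fls_const c * H = 0") (auto simp: fls_subdegree_mult)
qed

lemma ratio_scale:
  fixes G H S :: "'k::field fls"
  assumes S: "S \<noteq> 0" and H: "H \<noteq> 0" and cond: "G = 0 \<or> fls_subdegree H \<le> fls_subdegree G"
  shows "G $$ fls_subdegree H / H $$ fls_subdegree H = (S * G) $$ fls_subdegree (S * H) / (S * H) $$ fls_subdegree (S * H)"
proof -
  have cond': "S * G = 0 \<or> fls_subdegree (S * H) \<le> fls_subdegree (S * G)"
    using cond S H by (cases "G = 0") (auto simp: fls_subdegree_mult)
  have "G $$ fls_subdegree H / H $$ fls_subdegree H = (THE c. Rp G H c)" using the_ratio[OF H cond] by simp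
  also have "\<dots> = (THE c. Rp (S * G) (S * H) c)" using Rp_scale[OF S H] by simp
  also have "\<dots> = (S * G) $$ fls_subdegree (S * H) / (S * H) $$ fls_subdegree (S * H)"
    using the_ratio[OF _ cond'] S H by simp
  finally show ?thesis .
qed

lemma wpoly_dvd_ev2:
  assumes "wpoly E dvd G" "ev2 (wpoly E) x y = 0" shows "ev2 G x y = 0"
  using assms by (auto elim!: dvdE)

definition aparam :: "'k::field weier \<Rightarrow> 'k \<Rightarrow> 'k \<Rightarrow> 'k fls \<Rightarrow> bool" where
  "aparam E a b z \<longleftrightarrow> on_curve E a b \<and> 2 * b + wa1 E * a + wa3 E \<noteq> 0 \<and> ge_ord 1 z \<and>
     ev2 (wpoly E) (fls_const a + fls_X) (fls_const b + z) = 0"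

lemma aparam_ord:
  assumes ap: "aparam E a b z" and G: "ev2 G (fls_const a + fls_X) (fls_const b + z) \<noteq> 0"
  shows "ord_poly E (Pt a b) G = fls_subdegree (ev2 G (fls_const a + fls_X) (fls_const b + z))"
proof -
  have dec: "wpoly E = (varY - cst b) * (varY + cst b + cst (wa1 E) * varX + cst (wa3 E))
     + (varX - cst a) * (cst (wa1 E * b) - (varX ^ 2 + cst a * varX + cst (a ^ 2)) - cst (wa2 E) * (varX + cst a) - cst (wa4 E))"
    using ap by (simp add: aparam_def wpoly_dec)
  have A0: "eval2 (varY + cst b + cst (wa1 E) * varX + cst (wa3 E)) a b \<noteq> 0"
    using ap by (simp add: aparam_def algebra_simps mult_2)
  note o = ordp_param[OF dec A0 _ _ G]
  show ?thesis using o ap by (simp add: ord_poly_def aparam_def)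
qed

lemma aparam_dvd:
  assumes ap: "aparam E a b z"
  shows "wpoly E dvd G \<longleftrightarrow> ev2 G (fls_const a + fls_X) (fls_const b + z) = 0"
  using ap criterion_affine[of E a "fls_const b + z" G] wpoly_dvd_ev2[of E G]
  by (auto simp: aparam_def)

lemma fval_affine:
  assumes ap: "aparam E a b z" and h: "\<not> wpoly E dvd h"
    and cond: "wpoly E dvd g \<or> ord_poly E (Pt a b) h \<le> ord_poly E (Pt a b) g"
  defines "Phi \<equiv> \<lambda>G. ev2 G (fls_const a + fls_X) (fls_const b + z)"
  shows "fval E (Pt a b) g h = Phi g $$ fls_subdegree (Phi h) / Phi h $$ fls_subdegree (Phi h)"
    and "Phi g = 0 \<or> fls_subdegree (Phi h) \<le> fls_subdegree (Phi g)"
proof -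
  have dv: "wpoly E dvd G \<longleftrightarrow> Phi G = 0" for G using aparam_dvd[OF ap] by (simp add: Phi_def)
  have od: "Phi G \<noteq> 0 \<Longrightarrow> ord_poly E (Pt a b) G = fls_subdegree (Phi G)" for G
    using aparam_ord[OF ap] by (simp add: Phi_def)
  have hnz: "Phi h \<noteq> 0" using h dv by simp
  show cond': "Phi g = 0 \<or> fls_subdegree (Phi h) \<le> fls_subdegree (Phi g)"
    using cond dv od hnz by (cases "Phi g = 0") auto
  have PhiD: "Phi (g - cst c * h) = Phi g - fls_const c * Phi h" for c by (simp add: Phi_def)
  have eqv: "(wpoly E dvd (g - cst c * h) \<or> ord_poly E (Pt a b) (g - cst c * h) > ord_poly E (Pt a b) h)
        \<longleftrightarrow> Rp (Phi g) (Phi h) c" for c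
    unfolding Rp_def dv PhiD[symmetric] using od hnz by (cases "Phi (g - cst c * h) = 0") auto
  have "fval E (Pt a b) g h = (THE c. Rp (Phi g) (Phi h) c)"
    unfolding fval_def eqv by simp
  also have "\<dots> = Phi g $$ fls_subdegree (Phi h) / Phi h $$ fls_subdegree (Phi h)"
    by (rule the_ratio[OF hnz cond'])
  finally show "fval E (Pt a b) g h = Phi g $$ fls_subdegree (Phi h) / Phi h $$ fls_subdegree (Phi h)" .
qed


definition iparam :: "'k::field weier \<Rightarrow> 'k fls \<Rightarrow> bool" where
  "iparam E z \<longleftrightarrow> ge_ord 1 z \<and> ev2 (wpoly_inf E) fls_X z = 0"

definition lam :: "'k::field fls \<Rightarrow> 'k bipoly \<Rightarrow> 'k fls" where
  "lam z G = ev2 G (fls_X / z) (1 / z)"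

lemma ev2_wpoly_inf_dec:
  "ev2 (wpoly_inf E) fls_X z = z * ev2 (1 + cst (wa1 E) * varX + cst (wa3 E) * varY - cst (wa2 E) * varX ^ 2
      - cst (wa4 E) * varX * varY - cst (wa6 E) * varY ^ 2) fls_X z - fls_X ^ 3"
  by (subst wpoly_inf_dec) (simp add: power2_eq_square power3_eq_cube)

lemma iparam_sub:
  assumes "iparam E z" shows "z \<noteq> 0" "fls_subdegree z = 3"
proof -
  define A where "A = ev2 (1 + cst (wa1 E) * varX + cst (wa3 E) * varY - cst (wa2 E) * varX ^ 2
      - cst (wa4 E) * varX * varY - cst (wa6 E) * varY ^ 2) (fls_X :: 'a fls) z"
  have z1: "ge_ord 1 z" using assms by (simp add: iparam_def)
  have regz: "reg z" using ge_ord_mono[OF _ z1] by simp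
  have regX: "reg (fls_X :: 'a fls)" by (rule ge_ord_mono[of 0 1]) simp_all
  have e: "z * A = fls_X ^ 3" using assms ev2_wpoly_inf_dec[of E z] by (simp add: iparam_def A_def)
  have A0: "A $$ 0 = 1" unfolding A_def
    by (simp only: ev2_nth0[OF regX regz]) (use z1 in \<open>simp add: ge_ord1_iff\<close>)
  have regA: "reg A" unfolding A_def by (rule reg_ev2[OF regX regz])
  have Asub: "fls_subdegree A = 0" using A0 regA by (metis fls_subdegree_eqI ge_ord_def one_neq_zero)
  have Anz: "A \<noteq> 0" using A0 by auto
  show zn: "z \<noteq> 0" using e by auto
  have "fls_subdegree (z * A) = 3" using e by simp
  then show "fls_subdegree z = 3" using zn Anz Asub by (simp add: fls_subdegree_mult)
qed

lemma ev2_wpoly_gen: "ev2 (wpoly E) x y = y ^ 2 + fls_const (wa1 E) * x * y + fls_const (wa3 E) * y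
   - x ^ 3 - fls_const (wa2 E) * x ^ 2 - fls_const (wa4 E) * x - fls_const (wa6 E)"
  by (simp add: wpoly_def)

lemma ev2_wpoly_inf_gen: "ev2 (wpoly_inf E) x y = y + fls_const (wa1 E) * x * y + fls_const (wa3 E) * y ^ 2
   - x ^ 3 - fls_const (wa2 E) * x ^ 2 * y - fls_const (wa4 E) * x * y ^ 2 - fls_const (wa6 E) * y ^ 3"
  by (simp add: wpoly_inf_def)

lemma lam_W: assumes "iparam E z" shows "lam z (wpoly E) = 0"
proof -
  have zn: "z \<noteq> 0" using iparam_sub[OF assms] by simp
  have "lam z (wpoly E) * z ^ 3 = ev2 (wpoly_inf E) fls_X z"
    unfolding lam_def ev2_wpoly_gen ev2_wpoly_inf_gen using zn
    by (simp add: field_simps power2_eq_square power3_eq_cube)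
  then show ?thesis using assms zn by (simp add: iparam_def)
qed

lemma criterion_inf:
  assumes ip: "iparam E z" and G: "lam z G = 0"
  shows "wpoly E dvd G"
proof -
  have zn: "z \<noteq> 0" and z3: "fls_subdegree z = 3" using iparam_sub[OF ip] by auto
  define u where "u = fls_X / z"
  have un: "u \<noteq> 0" using zn by (simp add: u_def)
  have us: "fls_subdegree u = -2" using zn z3 by (simp add: u_def fls_divide_subdegree)
  have izs: "fls_subdegree (1 / z) = -3" using zn z3 by (simp add: fls_divide_subdegree)
  have izn: "1 / z \<noteq> 0" using zn by simp
  obtain q r0 r1 where e: "G = wpoly E * q + [:r0, r1:]" using wpoly_divide by blast
  have g: "evx r0 u + (1 / z) * evx r1 u = 0"
    using G lam_W[OF ip] unfolding e lam_def u_def by simp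
  have r1: "r1 = 0"
  proof (rule ccontr)
    assume r1: "r1 \<noteq> 0"
    note t1 = evx_neg_subdeg[OF _ un r1] 
    have "fls_subdegree ((1 / z) * evx r1 u) = fls_subdegree (1 / z) + fls_subdegree (evx r1 u)"
      by (rule fls_subdegree_mult) (use izn t1 us in auto)
    then have t1s: "fls_subdegree ((1 / z) * evx r1 u) = -3 - 2 * int (degree r1)"
      using t1 us izs by simp
    have t1n: "(1 / z) * evx r1 u \<noteq> 0" using t1 us izn by simp
    show False
    proof (cases "r0 = 0")
      case True then show False using g t1n by simp
    next
      case False
      note t0 = evx_neg_subdeg[OF _ un False]
      have "evx r0 u = - ((1 / z) * evx r1 u)" using g by (simp add: eq_neg_iff_add_eq_0)
      then have "fls_subdegree (evx r0 u) = fls_subdegree ((1 / z) * evx r1 u)"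
        by (simp add: fls_subdegree_minus)
      then have "- 2 * int (degree r0) = -3 - 2 * int (degree r1)" using t0 t1s us by simp
      then show False by presburger
    qed
  qed
  then have "evx r0 u = 0" using g by simp
  then have "r0 = 0" using evx_neg_subdeg[OF _ un, of r0] us by fastforce
  then show ?thesis using e r1 by simp
qed

lemma tdeg_bound:
  assumes "j \<le> degree G" "i \<le> degree (coeff G j)"
  shows "i + j \<le> tdeg G"
proof -
  have "degree (coeff G j) \<le> (MAX j \<in> {..degree G}. degree (coeff G j))"
    using assms(1) by (intro Max_ge) auto
  then show ?thesis using assms unfolding tdeg_def by linarith
qed

lemma homog_ev2:
  "ev2 (homog G) x y = (\<Sum>j\<le>degree G. \<Sum>i\<le>degree (coeff G j).
      fls_const (coeff (coeff G j) i) * x ^ i * y ^ (tdeg G - i - j))"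
  unfolding homog_def by (simp add: ev2_sum ev2_monom_monom)

lemma homog_rel:
  assumes zn: "z \<noteq> 0"
  shows "ev2 (homog G) fls_X z = z ^ tdeg G * lam z G"
proof -
  have "z ^ tdeg G * lam z G = (\<Sum>j\<le>degree G. \<Sum>i\<le>degree (coeff G j).
      z ^ tdeg G * (fls_const (coeff (coeff G j) i) * (fls_X / z) ^ i * (1 / z) ^ j))"
    unfolding lam_def ev2_altdef evx_altdef by (simp add: sum_distrib_left sum_distrib_right mult.assoc)
  also have "\<dots> = (\<Sum>j\<le>degree G. \<Sum>i\<le>degree (coeff G j).
      fls_const (coeff (coeff G j) i) * fls_X ^ i * z ^ (tdeg G - i - j))"
  proof (intro sum.cong refl)
    fix j i assume j: "j \<in> {..degree G}" and i: "i \<in> {..degree (coeff G j)}"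
    have le: "i + j \<le> tdeg G" using tdeg_bound[of j G i] i j by simp
    have zp: "z ^ tdeg G = z ^ (tdeg G - i - j) * z ^ i * z ^ j"
      using le by (simp flip: power_add)
    show "z ^ tdeg G * (fls_const (coeff (coeff G j) i) * (fls_X / z) ^ i * (1 / z) ^ j) =
      fls_const (coeff (coeff G j) i) * fls_X ^ i * z ^ (tdeg G - i - j)"
      unfolding zp using zn by (simp add: field_simps power_divide)
  qed
  finally show ?thesis by (simp add: homog_ev2)
qed

lemma Kc_homog:
  assumes K: "closedK K" and G: "coeffs_in K G" and z: "Kc K z"
  shows "Kc K (ev2 (homog G) fls_X z)"
  unfolding homog_ev2 using assms
  by (intro Kc_sum Kc_mult Kc_power Kc_const Kc_X) (auto simp: coeffs_in_def)

lemma ordp_inf: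
  assumes ip: "iparam E z" and G: "ev2 G fls_X z \<noteq> 0"
  shows "ordp (wpoly_inf E) 0 0 G = enat (nat (fls_subdegree (ev2 G fls_X z)))"
    and "0 \<le> fls_subdegree (ev2 G fls_X z)"
proof -
  have A0: "eval2 (1 + cst (wa1 E) * varX + cst (wa3 E) * varY - cst (wa2 E) * varX ^ 2
      - cst (wa4 E) * varX * varY - cst (wa6 E) * varY ^ 2) 0 0 \<noteq> 0" by simp
  note o = ordp_param[OF wpoly_inf_dec A0, of z G]
  show "ordp (wpoly_inf E) 0 0 G = enat (nat (fls_subdegree (ev2 G fls_X z)))"
    and "0 \<le> fls_subdegree (ev2 G fls_X z)"
    using o ip G by (simp_all add: iparam_def)
qed

lemma ord_inf:
  assumes ip: "iparam E z" and G: "\<not> wpoly E dvd G"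
  shows "ord_poly E Inf G = fls_subdegree (lam z G)"
proof -
  have zn: "z \<noteq> 0" and z3: "fls_subdegree z = 3" using iparam_sub[OF ip] by auto
  have ln: "lam z G \<noteq> 0" using criterion_inf[OF ip] G by blast
  have hr: "ev2 (homog G) fls_X z = z ^ tdeg G * lam z G" by (rule homog_rel[OF zn])
  have hn: "ev2 (homog G) fls_X z \<noteq> 0" using hr zn ln by simp
  have hs: "fls_subdegree (ev2 (homog G) fls_X z) = 3 * int (tdeg G) + fls_subdegree (lam z G)"
    using hr zn ln z3 by (simp add: fls_subdegree_mult fls_subdegree_pow)
  have yv: "ordp (wpoly_inf E) 0 0 varY = enat 3"
    using ordp_inf(1)[OF ip, of varY] zn z3 by simp
  note o = ordp_inf[OF ip hn]
  show ?thesis unfolding ord_poly_def using o yv hs by simp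
qed

lemma fval_inf:
  assumes ip: "iparam E z" and h: "\<not> wpoly E dvd h"
    and cond: "wpoly E dvd g \<or> ord_poly E Inf h \<le> ord_poly E Inf g"
  shows "fval E Inf g h = lam z g $$ fls_subdegree (lam z h) / lam z h $$ fls_subdegree (lam z h)"
    and "lam z g = 0 \<or> fls_subdegree (lam z h) \<le> fls_subdegree (lam z g)"
proof -
  define Phi where "Phi = lam z"
  have dv: "wpoly E dvd G \<longleftrightarrow> Phi G = 0" for G
    using criterion_inf[OF ip, of G] lam_W[OF ip] unfolding Phi_def lam_def by (auto elim!: dvdE)
  have od: "Phi G \<noteq> 0 \<Longrightarrow> ord_poly E Inf G = fls_subdegree (Phi G)" for G
    using ord_inf[OF ip] dv by (simp add: Phi_def)
  have hnz: "Phi h \<noteq> 0" using h dv by simp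
  show cond': "lam z g = 0 \<or> fls_subdegree (lam z h) \<le> fls_subdegree (lam z g)"
    using cond dv od hnz unfolding Phi_def[symmetric] by (cases "Phi g = 0") auto
  have PhiD: "Phi (g - cst c * h) = Phi g - fls_const c * Phi h" for c by (simp add: Phi_def lam_def)
  have eqv: "(wpoly E dvd (g - cst c * h) \<or> ord_poly E Inf (g - cst c * h) > ord_poly E Inf h)
        \<longleftrightarrow> Rp (Phi g) (Phi h) c" for c
    unfolding Rp_def dv PhiD[symmetric] using od hnz by (cases "Phi (g - cst c * h) = 0") auto
  have "fval E Inf g h = (THE c. Rp (Phi g) (Phi h) c)"
    unfolding fval_def eqv by simp
  also have "\<dots> = Phi g $$ fls_subdegree (Phi h) / Phi h $$ fls_subdegree (Phi h)"
    by (rule the_ratio[OF hnz cond'[folded Phi_def]])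
  finally show "fval E Inf g h = lam z g $$ fls_subdegree (lam z h) / lam z h $$ fls_subdegree (lam z h)"
    by (simp add: Phi_def)
qed


lemma frob_closed:
  fixes l m q :: nat
  assumes l: "prime l" and m: "m > 0" and q: "q = l ^ m" and c: "of_nat l = (0::'k::field)"
  shows "closedK {x::'k. x ^ q = x}" and "finite {x::'k. x ^ q = x}"
proof -
  have "CHAR('k) dvd l" using c by (simp add: of_nat_eq_0_iff_char_dvd)
  moreover have "CHAR('k) \<noteq> 1" by simp
  ultimately have ch: "CHAR('k) = l" using l by (metis prime_nat_iff)
  have pc: "prime CHAR('k)" using ch l by simp
  have add: "(x + y) ^ q = x ^ q + y ^ q" for x y :: 'k
    by (rule freshmans_dream'[OF pc]) (simp add: q ch)
  have q0: "q > 0" using l q by (simp add: prime_gt_0_nat)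
  have m1: "(-1::'k) ^ q = -1"
  proof -
    have "((-1) + 1 :: 'k) ^ q = (-1) ^ q + 1 ^ q" by (rule add)
    then have "(-1::'k) ^ q + 1 = 0" using q0 by (simp add: zero_power)
    then show ?thesis by (simp add: eq_neg_iff_add_eq_0)
  qed
  show "closedK {x::'k. x ^ q = x}"
    unfolding closedK_def
  proof (intro conjI ballI)
    show "(0::'k) \<in> {x. x ^ q = x}" using q0 by simp
    show "(1::'k) \<in> {x. x ^ q = x}" by simp
    fix x y :: 'k assume x: "x \<in> {x. x ^ q = x}"
    show "- x \<in> {x. x ^ q = x}" using x m1
      by (simp add: power_minus[of x q])
    show "inverse x \<in> {x. x ^ q = x}" using x by (simp add: power_inverse)
    assume y: "y \<in> {x. x ^ q = x}"
    show "x + y \<in> {x. x ^ q = x}" using x y by (simp add: add)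
    show "x * y \<in> {x. x ^ q = x}" using x y by (simp add: power_mult_distrib)
  qed
  have q1: "q > 1" using l q m by (metis one_less_power prime_gt_1_nat)
  define pp :: "'k poly" where "pp = monom 1 q - [:0, 1:]"
  have eqs: "{x::'k. x ^ q = x} = {x. poly pp x = 0}"
    by (simp add: poly_monom pp_def)
  have "pp \<noteq> 0"
  proof
    assume "pp = 0"
    then have "coeff pp q = 0" by simp
    then show False using q1 by (simp add: pp_def coeff_pCons split: nat.splits)
  qed
  then show "finite {x::'k. x ^ q = x}" unfolding eqs by (rule poly_roots_finite)
qed

lemma mod_2P:
  fixes x P :: int
  assumes "0 \<le> x" "x < 2 * P"
  shows "x mod P = (if x < P then x else x - P)"
proof (cases "x < P")
  case True then show ?thesis using assms by simp
next
  case False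
  have "x mod P = ((x - P) + P) mod P" by simp
  also have "\<dots> = (x - P) mod P" by (rule mod_add_self2)
  also have "\<dots> = x - P" using False assms by (intro mod_pos_pos_trivial) auto
  finally show ?thesis using False by simp
qed

lemma group_facts:
  fixes E :: "'k::field weier" and p :: nat
  assumes iso: "egroup E K \<cong> integer_mod_group p \<times>\<times> integer_mod_group p"
    and p: "prime p" "odd p"
  shows "card (points E K) = p ^ 2"
    and "\<And>a b. Pt a b \<in> points E K \<Longrightarrow> 2 * b + wa1 E * a + wa3 E \<noteq> 0"
proof -
  obtain f where f: "f \<in> iso (egroup E K) (integer_mod_group p \<times>\<times> integer_mod_group p)"
    using iso unfolding is_iso_def by blast
  have p0: "p \<noteq> 0" using p by auto
  have car: "carrier (integer_mod_group p \<times>\<times> integer_mod_group p) = {0..<int p} \<times> {0..<int p}"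
    using p0 by (simp add: DirProd_def carrier_integer_mod_group)
  have bij: "bij_betw f (points E K) ({0..<int p} \<times> {0..<int p})"
    using f car by (simp add: iso_def egroup_def)
  have hom: "f (eadd E x y) = ((fst (f x) + fst (f y)) mod int p, (snd (f x) + snd (f y)) mod int p)"
    if "x \<in> points E K" "y \<in> points E K" for x y
  proof -
    have "f (x \<otimes>\<^bsub>egroup E K\<^esub> y) = f x \<otimes>\<^bsub>integer_mod_group p \<times>\<times> integer_mod_group p\<^esub> f y"
      using f that by (simp add: iso_def hom_def egroup_def)
    then show ?thesis by (simp add: egroup_def DirProd_def split_beta)
  qed
  show "card (points E K) = p ^ 2"
    using bij_betw_same_card[OF bij] by (simp add: card_cartesian_product power2_eq_square)
  have InfK: "Inf \<in> points E K" by (simp add: points_def)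
  have rng: "f x \<in> {0..<int p} \<times> {0..<int p}" if "x \<in> points E K" for x
    using bij that by (auto simp: bij_betw_def)
  have dbl: "(u + u) mod int p = (if u + u < int p then u + u else u + u - int p)"
    if "u \<in> {0..<int p}" for u using that by (intro mod_2P) auto
  have fInf: "f Inf = (0, 0)"
  proof -
    obtain u v where uv: "f Inf = (u, v)" by fastforce
    have "f (eadd E Inf Inf) = ((u + u) mod int p, (v + v) mod int p)" using hom[OF InfK InfK] uv by simp
    moreover have "eadd E Inf Inf = Inf" by (simp add: eadd_def)
    ultimately have e: "(u + u) mod int p = u" "(v + v) mod int p = v" using uv by auto
    have "u \<in> {0..<int p}" "v \<in> {0..<int p}" using rng[OF InfK] uv by auto
    moreover have z1: "w = 0" if "(w + w) mod int p = w" "w \<in> {0..<int p}" for w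
    proof (cases "w + w < int p")
      case True then show ?thesis using that dbl[of w] by simp
    next
      case False then show ?thesis using that dbl[of w] by simp
    qed
    ultimately have "u = 0" "v = 0" using e by blast+
    then show ?thesis using uv by simp
  qed
  fix a b assume P: "Pt a b \<in> points E K"
  show "2 * b + wa1 E * a + wa3 E \<noteq> 0"
  proof
    assume t: "2 * b + wa1 E * a + wa3 E = 0"
    have "b + b + wa1 E * a + wa3 E = 0" using t by (metis mult_2)
    then have t2: "a = a \<and> b + b + wa1 E * a + wa3 E = 0" by blast
    have ee: "eadd E (Pt a b) (Pt a b) = Inf" unfolding eadd_def ecpt.case by (subst if_P[OF t2]) (rule refl)
    obtain u v where uv: "f (Pt a b) = (u, v)" by fastforce
    have "f (eadd E (Pt a b) (Pt a b)) = ((u + u) mod int p, (v + v) mod int p)" using hom[OF P P] uv by simp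
    then have e: "(u + u) mod int p = 0" "(v + v) mod int p = 0" using ee fInf by auto
    have r: "u \<in> {0..<int p}" "v \<in> {0..<int p}" using rng[OF P] uv by auto
    have oddp: "odd (int p)" using p by simp
    have z2: "w = 0" if "(w + w) mod int p = 0" "w \<in> {0..<int p}" for w
    proof (cases "w + w < int p")
      case True then show ?thesis using that dbl[of w] by simp
    next
      case False
      then have "int p = 2 * w" using that dbl[of w] by simp
      then have "even (int p)" by simp
      then show ?thesis using oddp by simp
    qed
    have "u = 0" by (rule z2[OF e(1) r(1)])
    moreover have "v = 0" by (rule z2[OF e(2) r(2)])
    ultimately have "f (Pt a b) = f Inf" using uv fInf by simp
    then have "Pt a b = Inf" using inj_onD[OF bij_betw_imp_inj_on[OF bij] _ P InfK] by blast
    then show False by simp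
  qed
qed


lemma aparam_exists:
  assumes K: "closedK K" and EK: "EK E K" and a: "a \<in> K" and b: "b \<in> K"
    and on: "on_curve E a b" and nz: "2 * b + wa1 E * a + wa3 E \<noteq> 0"
  shows "\<exists>z. aparam E a b z \<and> Kc K z"
proof -
  have A0: "eval2 (varY + cst b + cst (wa1 E) * varX + cst (wa3 E)) a b = 2 * b + wa1 E * a + wa3 E"
    by (simp add: algebra_simps)
  have a1: "wa1 E \<in> K" "wa3 E \<in> K" using EK by (auto simp: EK_def)
  have "b + b + wa1 E * a + wa3 E \<in> K"
    by (intro closedK_simps(3)[OF K] closedK_simps(4)[OF K]) (use a b a1 in simp_all)
  then have "2 * b + wa1 E * a + wa3 E \<in> K" by (subst mult_2)
  then obtain z where z: "ge_ord 1 z" "Kc K z" "ev2 (wpoly E) (fls_const a + fls_X) (fls_const b + z) = 0"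
    using hensel[OF K a b coeffs_in_wpoly[OF K EK] wpoly_dec[OF on]] A0 nz by auto
  then show ?thesis using on nz by (auto simp: aparam_def)
qed

lemma iparam_exists:
  assumes K: "closedK K" and EK: "EK E K"
  shows "\<exists>z. iparam E z \<and> Kc K z"
proof -
  have A0: "eval2 (1 + cst (wa1 E) * varX + cst (wa3 E) * varY - cst (wa2 E) * varX ^ 2
      - cst (wa4 E) * varX * varY - cst (wa6 E) * varY ^ 2) 0 0 = 1" by simp
  obtain z where z: "ge_ord 1 z" "Kc K z" "ev2 (wpoly_inf E) (fls_const 0 + fls_X) (fls_const 0 + z) = 0"
    using hensel[OF K closedK_simps(1)[OF K] closedK_simps(1)[OF K] coeffs_in_wpoly_inf[OF K EK] wpoly_inf_dec] A0
      closedK_simps(2)[OF K] by auto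
  then show ?thesis by (auto simp: iparam_def)
qed

lemma on_curve_other:
  "on_curve E a (- b - wa1 E * a - wa3 E) \<longleftrightarrow> on_curve E a b"
  unfolding on_curve_def by (simp add: algebra_simps power2_eq_square)

lemma on_curve_roots:
  assumes "on_curve E a b" "on_curve E a b'"
  shows "b' = b \<or> b' = - b - wa1 E * a - wa3 E"
proof -
  have e: "b' ^ 2 + wa1 E * a * b' + wa3 E * b' = b ^ 2 + wa1 E * a * b + wa3 E * b"
    using assms unfolding on_curve_def by simp
  have "(b' - b) * (b' + b + wa1 E * a + wa3 E) = (b' ^ 2 + wa1 E * a * b' + wa3 E * b') - (b ^ 2 + wa1 E * a * b + wa3 E * b)"
    by (simp add: algebra_simps power2_eq_square)
  also have "\<dots> = 0" using e by simp
  finally have "b' - b = 0 \<or> b' + b + wa1 E * a + wa3 E = 0" by simp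
  then show ?thesis
  proof
    assume "b' - b = 0" then show ?thesis by simp
  next
    assume h: "b' + b + wa1 E * a + wa3 E = 0"
    have "b' = (b' + b + wa1 E * a + wa3 E) - b - wa1 E * a - wa3 E" by simp
    also have "\<dots> = - b - wa1 E * a - wa3 E" unfolding h by simp
    finally show ?thesis by simp
  qed
qed

locale ecsetup =
  fixes E :: "'k::field weier" and K :: "'k set" and p :: nat and x0 y0 y1 :: 'k
  assumes K: "closedK K" and Kfin: "finite K" and EK: "EK E K"
    and card_pts: "card (points E K) = p ^ 2"
    and tors: "\<And>a b. Pt a b \<in> points E K \<Longrightarrow> 2 * b + wa1 E * a + wa3 E \<noteq> 0"
    and Qon: "on_curve E x0 y0" and x0K: "x0 \<in> K" and y1: "y1 = - y0 - wa1 E * x0 - wa3 E"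
    and y0K: "y0 \<notin> K" and y1K: "y1 \<notin> K" and y01: "y0 \<noteq> y1"
begin

abbreviation "PP \<equiv> points E K"

lemma y1on: "on_curve E x0 y1" using on_curve_other[of E x0 y0] Qon y1 by simp

lemma x0_roots: "on_curve E x0 b \<Longrightarrow> b = y0 \<or> b = y1"
  using on_curve_roots[OF Qon] y1 by blast

lemma AQ0: "2 * y0 + wa1 E * x0 + wa3 E \<noteq> 0"
proof -
  have "2 * y0 + wa1 E * x0 + wa3 E = y0 - y1" unfolding y1 by (subst mult_2) (simp add: algebra_simps)
  then show ?thesis by (simp only:) (use y01 in simp)
qed

lemma AQ1: "2 * y1 + wa1 E * x0 + wa3 E \<noteq> 0"
proof -
  have "2 * y1 + wa1 E * x0 + wa3 E = y1 - y0" unfolding y1 by (subst mult_2) (simp add: algebra_simps)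
  then show ?thesis by (simp only:) (use y01 in simp)
qed

lemma ptsK: "Pt a b \<in> PP \<longleftrightarrow> a \<in> K \<and> b \<in> K \<and> on_curve E a b"
  by (simp add: points_def)

lemma x0_noK: "Pt x0 b \<notin> PP"
  using x0_roots y0K y1K by (auto simp: ptsK)

lemma finPP: "finite PP"
proof -
  have "PP \<subseteq> insert Inf ((\<lambda>(a, b). Pt a b) ` (K \<times> K))"
    by (auto simp: points_def)
  then show ?thesis using Kfin by (meson finite_SigmaI finite_imageI finite_insert finite_subset)
qed

lemma InfPP: "Inf \<in> PP" by (simp add: points_def)

lemma param_K: "Pt a b \<in> PP \<Longrightarrow> \<exists>z. aparam E a b z \<and> Kc K z"
  using aparam_exists[OF K EK] tors by (auto simp: ptsK)

lemma param_Q0: "\<exists>z. aparam E x0 y0 z"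
  using aparam_exists[OF closedK_UNIV, of E x0 y0] Qon AQ0 by (auto simp: EK_def)

lemma param_Q1: "\<exists>z. aparam E x0 y1 z"
  using aparam_exists[OF closedK_UNIV, of E x0 y1] y1on AQ1 by (auto simp: EK_def)

lemma param_inf: "\<exists>z. iparam E z \<and> Kc K z"
  using iparam_exists[OF K EK] .

definition fib :: "'k \<Rightarrow> 'k ecpt set" where "fib a = {P \<in> PP. \<exists>b. P = Pt a b}"

definition X0 :: "'k set" where "X0 = {a. \<exists>b. Pt a b \<in> PP}"

lemma fib_card: assumes "a \<in> X0" shows "card (fib a) = 2"
proof -
  obtain b where b: "Pt a b \<in> PP" using assms by (auto simp: X0_def)
  define b' where "b' = - b - wa1 E * a - wa3 E"
  have abK: "a \<in> K" "b \<in> K" "on_curve E a b" using b by (auto simp: ptsK)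
  have b'K: "b' \<in> K" using abK K EK unfolding b'_def EK_def by (auto intro!: closedK_simps(3,4,5,7))
  have b'on: "on_curve E a b'" using on_curve_other[of E a b] abK(3) by (simp add: b'_def)
  have e2: "2 * b + wa1 E * a + wa3 E = b - b'" unfolding b'_def by (subst mult_2) (simp add: algebra_simps)
  have ne: "b \<noteq> b'" using tors[OF b] e2 by simp
  have "fib a = {Pt a b, Pt a b'}"
  proof
    show "fib a \<subseteq> {Pt a b, Pt a b'}"
    proof
      fix P assume "P \<in> fib a"
      then obtain c where P: "P = Pt a c" "on_curve E a c" by (auto simp: fib_def ptsK)
      then have "c = b \<or> c = b'" using on_curve_roots[OF abK(3) P(2)] by (simp add: b'_def)
      then show "P \<in> {Pt a b, Pt a b'}" using P by auto
    qed
    show "{Pt a b, Pt a b'} \<subseteq> fib a" using b b'K b'on abK by (auto simp: fib_def ptsK)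
  qed
  then show ?thesis using ne by simp
qed

lemma aff_union: "PP - {Inf} = (\<Union>a\<in>X0. fib a)"
proof
  show "PP - {Inf} \<subseteq> (\<Union>a\<in>X0. fib a)"
  proof
    fix P assume P: "P \<in> PP - {Inf}"
    then obtain a b where "P = Pt a b" by (cases P) auto
    then show "P \<in> (\<Union>a\<in>X0. fib a)" using P by (auto simp: X0_def fib_def)
  qed
  show "(\<Union>a\<in>X0. fib a) \<subseteq> PP - {Inf}" by (auto simp: fib_def)
qed

lemma finX0: "finite X0"
proof -
  have "X0 \<subseteq> K" by (auto simp: X0_def ptsK)
  then show ?thesis using Kfin finite_subset by blast
qed

lemma fib_disj: "a \<noteq> a' \<Longrightarrow> fib a \<inter> fib a' = {}"
  by (auto simp: fib_def)

lemma card_union_fibs: "A \<subseteq> X0 \<Longrightarrow> card (\<Union>a\<in>A. fib a) = 2 * card A"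
proof -
  assume A: "A \<subseteq> X0"
  have fA: "finite A" using A finX0 finite_subset by blast
  have "card (\<Union>a\<in>A. fib a) = (\<Sum>a\<in>A. card (fib a))"
    by (rule card_UN_disjoint[OF fA]) (auto simp: fib_def finPP fib_disj)
  also have "\<dots> = (\<Sum>a\<in>A. 2)" by (rule sum.cong[OF refl]) (use A fib_card in blast)
  finally show ?thesis by (simp add: mult.commute)
qed

lemma card_X0: "2 * card X0 = p ^ 2 - 1"
proof -
  have "card (PP - {Inf}) = p ^ 2 - 1" using card_pts InfPP finPP by simp
  then show ?thesis using card_union_fibs[of X0] aff_union by simp
qed

end


lemma ord_poly_nonneg: "ord_poly E (Pt a b) G \<ge> 0"
  by (simp add: ord_poly_def)

lemma eval2_wpoly: "on_curve E a b \<Longrightarrow> eval2 (wpoly E) a b = 0"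
  by (simp add: wpoly_def on_curve_def algebra_simps)

lemma not_dvd_const: "p \<noteq> 0 \<Longrightarrow> \<not> wpoly E dvd [:p:]"
proof
  assume "p \<noteq> 0" "wpoly E dvd [:p:]"
  then have "degree (wpoly E) \<le> degree [:p:]" by (intro dvd_imp_degree_le) auto
  then show False by (simp add: wpoly_lead)
qed

lemma lam_const: "lam z [:p:] = evx p (fls_X / z)"
  by (simp add: lam_def)

lemma lam_const_sub:
  assumes "iparam E z" "p \<noteq> 0"
  shows "lam z [:p:] \<noteq> 0 \<and> fls_subdegree (lam z [:p:]) = - 2 * int (degree p)"
proof -
  have zn: "z \<noteq> 0" and z3: "fls_subdegree z = 3" using iparam_sub[OF assms(1)] by auto
  have us: "fls_subdegree (fls_X / z) = -2" using zn z3 by (simp add: fls_divide_subdegree)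
  have un: "fls_X / z \<noteq> 0" using zn by simp
  show ?thesis using evx_neg_subdeg[of "fls_X / z" p] us un assms(2) by (simp add: lam_const)
qed

lemma ord_inf_const:
  assumes "iparam E z" "p \<noteq> 0"
  shows "ord_poly E Inf [:p:] = - 2 * int (degree p)"
  using ord_inf[OF assms(1) not_dvd_const[OF assms(2)]] lam_const_sub[OF assms] by simp

lemma ord_aff_const:
  assumes "aparam E a b z" "p \<noteq> 0"
  shows "ord_poly E (Pt a b) [:p:] = int (order a p)"
proof -
  have "ev2 [:p:] (fls_const a + fls_X) (fls_const b + z) = evx p (fls_const a + fls_X)" by simp
  then show ?thesis using aparam_ord[OF assms(1)] evx_shift[OF assms(2), of a] by simp
qed

context ecsetup
begin

lemma PP_UNIV: "P \<in> PP \<Longrightarrow> P \<in> points E UNIV"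
  by (auto simp: points_def)

lemma fval_in_K:
  assumes LD: "in_LD E K D g h" and P: "P \<in> PP" and D0: "D P = 0"
  shows "fval E P g h \<in> K"
proof -
  have gK: "coeffs_in K g" and hK: "coeffs_in K h" and hW: "\<not> wpoly E dvd h"
    using LD by (auto simp: in_LD_def ratfun_def)
  have cond0: "wpoly E dvd g \<or> ord_fun E P g h \<ge> 0"
    using LD PP_UNIV[OF P] D0 by (auto simp: in_LD_def)
  show ?thesis
  proof (cases P)
    case Inf
    obtain z where z: "iparam E z" "Kc K z" using param_inf by blast
    have cond: "wpoly E dvd g \<or> ord_poly E Inf h \<le> ord_poly E Inf g"
      using cond0 Inf by (auto simp: ord_fun_def)
    note fv = fval_inf[OF z(1) hW cond]
    have zn: "z \<noteq> 0" using iparam_sub[OF z(1)] by simp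
    have hn: "lam z h \<noteq> 0" using criterion_inf[OF z(1)] hW by blast
    define S where "S = z ^ (tdeg g + tdeg h)"
    have Sn: "S \<noteq> 0" using zn by (simp add: S_def)
    have Sg: "S * lam z g = z ^ tdeg h * ev2 (homog g) fls_X z"
      using homog_rel[OF zn, of g] by (simp add: S_def power_add algebra_simps)
    have Sh: "S * lam z h = z ^ tdeg g * ev2 (homog h) fls_X z"
      using homog_rel[OF zn, of h] by (simp add: S_def power_add algebra_simps)
    have K1: "Kc K (S * lam z g)" unfolding Sg using K gK z(2)
      by (intro Kc_mult Kc_power Kc_homog) auto
    have K2: "Kc K (S * lam z h)" unfolding Sh using K hK z(2)
      by (intro Kc_mult Kc_power Kc_homog) auto
    have "fval E P g h = (S * lam z g) $$ fls_subdegree (S * lam z h) / (S * lam z h) $$ fls_subdegree (S * lam z h)"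
      using fv(1) ratio_scale[OF Sn hn fv(2)] Inf by simp
    then show ?thesis using K1 K2 K unfolding Kc_def by (simp add: closedK_simps(8))
  next
    case (Pt a b)
    obtain z where z: "aparam E a b z" "Kc K z" using param_K P Pt by blast
    have cond: "wpoly E dvd g \<or> ord_poly E (Pt a b) h \<le> ord_poly E (Pt a b) g"
      using cond0 Pt by (auto simp: ord_fun_def)
    note fv = fval_affine[OF z(1) hW cond]
    have ab: "a \<in> K" "b \<in> K" using P Pt by (auto simp: ptsK)
    have Kx: "Kc K (fls_const a + fls_X)" using K ab by (simp add: Kc_add Kc_const)
    have Ky: "Kc K (fls_const b + z)" using K ab z(2) by (simp add: Kc_add Kc_const)
    have K1: "Kc K (ev2 g (fls_const a + fls_X) (fls_const b + z))" by (rule Kc_ev2[OF K gK Kx Ky])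
    have K2: "Kc K (ev2 h (fls_const a + fls_X) (fls_const b + z))" by (rule Kc_ev2[OF K hK Kx Ky])
    show ?thesis using fv(1) K1 K2 K Pt unfolding Kc_def by (simp add: closedK_simps(8))
  qed
qed

lemma finite_code:
  assumes D0: "\<And>P. P \<in> PP \<Longrightarrow> D P = 0"
  shows "finite (ag_code E K PP D)"
proof -
  have "ag_code E K PP D \<subseteq> {f. \<forall>x. (x \<in> PP \<longrightarrow> f x \<in> K) \<and> (x \<notin> PP \<longrightarrow> f x = 0)}"
    using fval_in_K D0 by (auto simp: ag_code_def)
  moreover have "finite {f. \<forall>x. (x \<in> PP \<longrightarrow> f x \<in> K) \<and> (x \<notin> PP \<longrightarrow> f x = (0::'k))}"
    by (rule finite_set_of_finite_funs[OF finPP Kfin])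
  ultimately show ?thesis by (rule finite_subset)
qed

end


context ecsetup
begin

definition Dk :: "nat \<Rightarrow> 'k ecpt \<Rightarrow> int" where
  "Dk k P = int k * ((if P = Pt x0 y0 then 1 else 0) + (if P = Pt x0 y1 then 1 else 0))"

lemma Dk_PP: "P \<in> PP \<Longrightarrow> Dk k P = 0"
  using x0_noK by (auto simp: Dk_def)

lemma exists_weight:
  assumes j: "j \<le> 2 * k" and kp: "2 * k < p ^ 2"
  shows "\<exists>c \<in> ag_code E K PP (Dk k). hweight PP c = p ^ 2 - j"
proof -
  define m where "m = j div 2"
  define e where "e = j mod 2"
  have jme: "j = 2 * m + e" by (simp add: m_def e_def)
  have e01: "e = 0 \<or> e = 1" by (auto simp: e_def)
  have mek: "m + e \<le> k" using j jme e01 by auto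
  have mX: "m \<le> card X0" using card_X0 kp jme j by linarith
  obtain A where A: "A \<subseteq> X0" "card A = m" "finite A" using obtain_subset_with_card_n[OF mX] by blast
  have AK: "A \<subseteq> K" using A(1) by (auto simp: X0_def ptsK)
  have x0A: "x0 \<notin> X0" using x0_noK by (auto simp: X0_def)
  define gx :: "'k poly" where "gx = (\<Prod>a\<in>A. [:- a, 1:])"
  define hx :: "'k poly" where "hx = [:- x0, 1:] ^ (m + e)"
  define g where "g = [:gx:]"
  define h where "h = [:hx:]"
  have gx0: "gx \<noteq> 0" by (simp add: gx_def A(3))
  have hx0: "hx \<noteq> 0" by (simp add: hx_def)
  have dg: "degree gx = m" unfolding gx_def using A by (simp add: degree_prod_eq_sum_degree)
  have dh: "degree hx = m + e" unfolding hx_def by (simp add: degree_power_eq)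
  have pg: "poly gx a = 0 \<longleftrightarrow> a \<in> A" for a unfolding gx_def using A(3) by (simp add: poly_prod)
  have ph: "a \<noteq> x0 \<Longrightarrow> poly hx a \<noteq> 0" for a by (simp add: hx_def)
  have oh: "order x0 hx = m + e" by (simp add: hx_def order_power_n_n)
  have hW: "\<not> wpoly E dvd h" using not_dvd_const[OF hx0] by (simp add: h_def)
  have gW: "\<not> wpoly E dvd g" using not_dvd_const[OF gx0] by (simp add: g_def)
  have gK: "coeffs_in K g" unfolding g_def gx_def using K AK
    by (intro coeffs_in_const Kp_prod Kp_pCons) (auto simp: closedK_simps Kp_const[of K 1, simplified] one_pCons Kp_0)
  have hK: "coeffs_in K h" unfolding h_def hx_def using K x0K
    by (intro coeffs_in_const Kp_power Kp_pCons) (auto simp: closedK_simps Kp_const[of K 1, simplified] one_pCons Kp_0)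
  obtain zi where zi: "iparam E zi" "Kc K zi" using param_inf by blast
  have oig: "ord_poly E Inf g = - 2 * int m" using ord_inf_const[OF zi(1) gx0] dg by (simp add: g_def)
  have oih: "ord_poly E Inf h = - 2 * int (m + e)" using ord_inf_const[OF zi(1) hx0] dh by (simp add: h_def)
  have LD: "in_LD E K (Dk k) g h"
    unfolding in_LD_def ratfun_def
  proof (intro conjI disjI2 ballI)
    show "coeffs_in K g" "coeffs_in K h" "\<not> wpoly E dvd h" by (fact gK, fact hK, fact hW)
    fix P :: "'k ecpt" assume P: "P \<in> points E UNIV"
    show "- Dk k P \<le> ord_fun E P g h"
    proof (cases P)
      case Inf
      then show ?thesis using oig oih by (simp add: ord_fun_def Dk_def)
    next
      case (Pt a b)
      have on: "on_curve E a b" using P Pt by (simp add: points_def)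
      show ?thesis
      proof (cases "a = x0")
        case True
        then have bb: "b = y0 \<or> b = y1" using x0_roots on by blast
        obtain z where z: "aparam E x0 b z"
          using bb param_Q0 param_Q1 by blast
        have "ord_poly E (Pt a b) h = int (m + e)"
          using ord_aff_const[OF z hx0] oh True by (simp add: h_def)
        moreover have "Dk k P = int k" using bb y01 Pt True by (auto simp: Dk_def)
        ultimately show ?thesis using ord_poly_nonneg[of E a b g] mek Pt by (simp add: ord_fun_def)
      next
        case False
        have "ordp (wpoly E) a b h = 0"
          by (rule ordp_zero) (use ph[OF False] eval2_wpoly[OF on] in \<open>simp_all add: h_def eval2_alt\<close>)
        then have "ord_poly E (Pt a b) h = 0" by (simp add: ord_poly_def zero_enat_def)
        moreover have "Dk k P \<ge> 0" by (simp add: Dk_def)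
        ultimately show ?thesis using ord_poly_nonneg[of E a b g] Pt by (simp add: ord_fun_def)
      qed
    qed
  qed
  define c where "c = (\<lambda>P. if P \<in> PP then fval E P g h else 0)"
  have cC: "c \<in> ag_code E K PP (Dk k)" using LD by (auto simp: ag_code_def c_def)
  have aff: "fval E (Pt a b) g h \<noteq> 0 \<longleftrightarrow> a \<notin> A" if P: "Pt a b \<in> PP" for a b
  proof -
    obtain z where z: "aparam E a b z" using param_K[OF P] by blast
    have ax: "a \<noteq> x0" using P x0_noK by auto
    have on: "on_curve E a b" using P by (simp add: ptsK)
    have "ordp (wpoly E) a b h = 0"
      by (rule ordp_zero) (use ph[OF ax] eval2_wpoly[OF on] in \<open>simp_all add: h_def eval2_alt\<close>)
    then have "ord_poly E (Pt a b) h = 0" by (simp add: ord_poly_def zero_enat_def)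
    then have cond: "wpoly E dvd g \<or> ord_poly E (Pt a b) h \<le> ord_poly E (Pt a b) g"
      using ord_poly_nonneg[of E a b g] by simp
    define xx :: "'k fls" where "xx = fls_const a + fls_X"
    have regxx: "reg xx" unfolding xx_def by (rule ge_ord_add[OF ge_ord_const ge_ord_mono[OF _ ge_ord_X]]) simp
    have Pg: "ev2 g xx (fls_const b + z) = evx gx xx" by (simp add: g_def)
    have Ph: "ev2 h xx (fls_const b + z) = evx hx xx" by (simp add: h_def)
    have sh: "fls_subdegree (evx hx xx) = 0"
      using evx_shift[OF hx0, of a] order_0I[OF ph[OF ax]] by (simp add: xx_def)
    have fv: "fval E (Pt a b) g h = evx gx xx $$ 0 / evx hx xx $$ 0"
      using fval_affine(1)[OF z hW cond] Pg Ph sh by (simp add: xx_def)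
    also have "\<dots> = poly gx a / poly hx a" by (simp only: evx_nth0[OF regxx]) (simp add: xx_def)
    finally show ?thesis using ph[OF ax] pg by simp
  qed
  have inf: "fval E Inf g h \<noteq> 0 \<longleftrightarrow> e = 0"
  proof -
    have cond: "wpoly E dvd g \<or> ord_poly E Inf h \<le> ord_poly E Inf g" using oig oih by simp
    note fv = fval_inf(1)[OF zi(1) hW cond]
    have lg: "lam zi g \<noteq> 0" "fls_subdegree (lam zi g) = - 2 * int m"
      using lam_const_sub[OF zi(1) gx0] dg by (simp_all add: g_def)
    have lh: "lam zi h \<noteq> 0" "fls_subdegree (lam zi h) = - 2 * int (m + e)"
      using lam_const_sub[OF zi(1) hx0] dh by (simp_all add: h_def)
    show ?thesis
    proof (cases "e = 0")
      case True
      then have "fls_subdegree (lam zi h) = fls_subdegree (lam zi g)" using lg lh by simp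
      then have "lam zi g $$ fls_subdegree (lam zi h) \<noteq> 0" "lam zi h $$ fls_subdegree (lam zi h) \<noteq> 0"
        using lg(1) lh(1) by (simp_all del: nth_fls_subdegree_zero_iff) (metis nth_fls_subdegree_nonzero)
      then show ?thesis using fv True by simp
    next
      case False
      then have "fls_subdegree (lam zi h) < fls_subdegree (lam zi g)" using lg lh e01 by simp
      then have "lam zi g $$ fls_subdegree (lam zi h) = 0" by simp
      then show ?thesis using fv False by simp
    qed
  qed
  define U where "U = (\<Union>a\<in>A. fib a)"
  have Usub: "U \<subseteq> PP - {Inf}" using aff_union A(1) by (auto simp: U_def)
  have cU: "card U = 2 * m" using card_union_fibs[OF A(1)] A(2) by (simp add: U_def)
  have supp1: "P \<in> (PP - {Inf} - U) \<union> (if e = 0 then {Inf} else {})" if "P \<in> {P \<in> PP. c P \<noteq> 0}" for P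
  proof -
    from that have P: "P \<in> PP" "fval E P g h \<noteq> 0" by (auto simp: c_def)
    show "P \<in> (PP - {Inf} - U) \<union> (if e = 0 then {Inf} else {})"
    proof (cases P)
      case Inf then show ?thesis using P inf by simp
    next
      case (Pt a b)
      then have "a \<notin> A" using aff P by blast
      then show ?thesis using Pt P by (auto simp: U_def fib_def)
    qed
  qed
  have supp2: "P \<in> {P \<in> PP. c P \<noteq> 0}" if P: "P \<in> (PP - {Inf} - U) \<union> (if e = 0 then {Inf} else {})" for P
  proof -
    show "P \<in> {P \<in> PP. c P \<noteq> 0}"
    proof (cases P)
      case Inf then show ?thesis using P inf InfPP by (auto simp: c_def split: if_splits)
    next
      case (Pt a b)
      then have PP': "Pt a b \<in> PP" and "Pt a b \<notin> U" using P by (auto split: if_splits)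
      then have "a \<notin> A" using A(1) by (auto simp: U_def fib_def)
      then show ?thesis using aff[OF PP'] PP' Pt by (simp add: c_def)
    qed
  qed
  have supp: "{P \<in> PP. c P \<noteq> 0} = (PP - {Inf} - U) \<union> (if e = 0 then {Inf} else {})"
    using supp1 supp2 by blast
  have fin1: "finite (PP - {Inf} - U)" using finPP by simp
  have c1: "card (PP - {Inf} - U) = p ^ 2 - 1 - 2 * m"
  proof -
    have "card (PP - {Inf}) = p ^ 2 - 1" using card_pts InfPP finPP by simp
    then show ?thesis using card_Diff_subset[OF _ Usub] cU finPP Usub
      by (metis finite_Diff finite_subset)
  qed
  have le: "2 * m + 1 \<le> p ^ 2" using card_X0 mX kp by linarith
  have "hweight PP c = p ^ 2 - j"
  proof (cases "e = 0")
    case True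
    have "card ((PP - {Inf} - U) \<union> {Inf}) = card (PP - {Inf} - U) + 1"
      using fin1 by simp
    then show ?thesis unfolding hweight_def supp using True c1 jme le by simp
  next
    case False
    then have "e = 1" using e01 by simp
    then show ?thesis unfolding hweight_def supp using c1 jme le by simp
  qed
  then show ?thesis using cC by blast
qed

end


lemma eadd_Inf_D:
  assumes "eadd E (Pt x1 y1) (Pt x2 y2) = Inf"
  shows "x1 = x2 \<and> y1 + y2 + wa1 E * x2 + wa3 E = 0"
proof (rule ccontr)
  assume n: "\<not> (x1 = x2 \<and> y1 + y2 + wa1 E * x2 + wa3 E = 0)"
  have "eadd E (Pt x1 y1) (Pt x2 y2) \<noteq> Inf"
    unfolding eadd_def ecpt.case if_not_P[OF n] by (auto simp: Let_def split: prod.splits)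
  then show False using assms by simp
qed

theorem mainTheorem7:
  fixes E :: "'k::field weier" and q p k :: nat and Q :: "'k ecpt"
  assumes "alg_closed_type TYPE('k)"
    and "prime l" and "m > 0" and "q = l ^ m" and "of_nat l = (0::'k)"
    and "q \<ge> 7"
    and "prime p" and "odd p"
    and "{wa1 E, wa2 E, wa3 E, wa4 E, wa6 E} \<subseteq> {x. x ^ q = x}"
    and "nonsingular E"
    and "egroup E {x. x ^ q = x} \<cong> integer_mod_group p \<times>\<times> integer_mod_group p"
    and "Q \<in> points E {x. x ^ (q^2) = x} - points E {x. x ^ q = x}"
    and "eadd E Q (frob q Q) = Inf"
    and "p dvd k" and "0 < k" and "2 * k < p^2"
  shows "\<forall>w. p^2 - 2 * k \<le> w \<and> w \<le> p^2 \<longrightarrow>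
           weight_count
             (ag_code E {x. x ^ q = x} (points E {x. x ^ q = x})
                (\<lambda>P. int k * ((if P = Q then 1 else 0) + (if P = frob q Q then 1 else 0))))
             (points E {x. x ^ q = x}) w > 0"
proof -
  define K :: "'k set" where "K = {x. x ^ q = x}"
  note fc = frob_closed[OF assms(2,3,4,5)]
  have K: "closedK K" and Kfin: "finite K" using fc by (simp_all add: K_def)
  have EK: "EK E K" using assms(9) by (simp add: EK_def K_def)
  note gf = group_facts[OF assms(11) assms(7,8)]
  obtain x0 y0 where Q: "Q = Pt x0 y0" and Qon: "on_curve E x0 y0"
      and Q2: "y0 ^ (q ^ 2) = y0" and QK: "\<not> (x0 \<in> K \<and> y0 \<in> K)"
    using assms(12) by (auto simp: points_def K_def)
  have fQ: "frob q Q = Pt (x0 ^ q) (y0 ^ q)" by (simp add: Q frob_def)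
  have "eadd E (Pt x0 y0) (Pt (x0 ^ q) (y0 ^ q)) = Inf" using assms(13) unfolding Q frob_def by simp
  from eadd_Inf_D[OF this] have ee: "x0 = x0 ^ q \<and> y0 + y0 ^ q + wa1 E * x0 ^ q + wa3 E = 0" .
  have e1: "x0 ^ q = x0" using conjunct1[OF ee] by (rule sym)
  have x0K: "x0 \<in> K" using e1 by (simp add: K_def)
  have y0K: "y0 \<notin> K" using QK x0K by simp
  define y1 where "y1 = y0 ^ q"
  have e2: "y0 + y1 + wa1 E * x0 + wa3 E = 0" using conjunct2[OF ee] unfolding e1 y1_def .
  have "y1 = (y0 + y1 + wa1 E * x0 + wa3 E) - y0 - wa1 E * x0 - wa3 E" by simp
  also have "\<dots> = - y0 - wa1 E * x0 - wa3 E" unfolding e2 by simp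
  finally have y1e: "y1 = - y0 - wa1 E * x0 - wa3 E" .
  have y01: "y0 \<noteq> y1" using y0K by (simp add: y1_def K_def)
  have "y1 ^ q = y0" using Q2 by (simp add: y1_def power_mult[symmetric] power2_eq_square)
  then have y1K: "y1 \<notin> K" using y01 by (simp add: K_def)
  interpret ec: ecsetup E K p x0 y0 y1
    by unfold_locales (use K Kfin EK gf Qon x0K y1e y0K y1K y01 in \<open>simp_all add: K_def\<close>)
  have fQ': "frob q Q = Pt x0 y1" using fQ e1 by (simp add: y1_def)
  have D: "(\<lambda>P. int k * ((if P = Q then 1 else 0) + (if P = frob q Q then 1 else 0))) = ec.Dk k"
    unfolding fQ' by (rule ext) (simp add: ec.Dk_def Q)
  show ?thesis
  proof (intro allI impI)
    fix w assume w: "p ^ 2 - 2 * k \<le> w \<and> w \<le> p ^ 2"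
    define j where "j = p ^ 2 - w"
    have j: "j \<le> 2 * k" and wj: "w = p ^ 2 - j" using w by (auto simp: j_def)
    obtain c where c: "c \<in> ag_code E K (points E K) (ec.Dk k)" "hweight (points E K) c = w"
      using ec.exists_weight[OF j assms(16)] wj by blast
    have fin: "finite {c \<in> ag_code E K (points E K) (ec.Dk k). hweight (points E K) c = w}"
      using ec.finite_code[OF ec.Dk_PP] by simp
    have "card {c \<in> ag_code E K (points E K) (ec.Dk k). hweight (points E K) c = w} > 0"
      using fin c by (auto simp: card_gt_0_iff)
    then show "weight_count
             (ag_code E {x. x ^ q = x} (points E {x. x ^ q = x})
                (\<lambda>P. int k * ((if P = Q then 1 else 0) + (if P = frob q Q then 1 else 0))))
             (points E {x. x ^ q = x}) w > 0"
      unfolding D weight_count_def K_def[symmetric] .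
  qed
qed


end
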